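(* Let $G$ be a connected nontrivial graph with $m$ vertices and let $n\geq2$. If $\min\{(3n-2)\lambda(G),\ m+2e(G)\}> \min\{2\xi(G)+4,\ 5\delta(G)+1\}$, then $G\boxtimes P_n$ is super restricted edge-connected.
   Context: All graphs are finite, simple and undirected; "nontrivial" means having at least two vertices. $P_n$ denotes the path on $n$ vertices. For a graph $G$: $e(G)=|E(G)|$; $\delta(G)$ is the minimum degree; $\lambda(G)$ is the edge-connectivity; for an edge $uv$, its edge-degree is $d_G(u)+d_G(v)-2$, and $\xi(G)$ is the minimum edge-degree over all edges of $G$. A restricted edge-cut of a connected graph $G$ is a set $S\subseteq E(G)$ such that $G-S$ is disconnected and every component of $G-S$ has at least $2$ vertices; $\lambda'(G)$ is the minimum cardinality of a restricted edge-cut. A graph is super restricted edge-connected if every minimum restricted edge-cut $S$ isolates an edge, i.e. some component of $G-S$ consists of exactly two (adjacent) vertices. The strong product $G\boxtimes H$ has vertex set $V(G)\times V(H)$, with $(x_1,y_1)$ and $(x_2,y_2)$ adjacent iff either $x_1=x_2$ and $y_1y_2\in E(H)$, or $y_1=y_2$ and $x_1x_2\in E(G)$, or $x_1x_2\in E(G)$ and $y_1y_2\in E(H)$. *)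

theory Defs
  imports Main
begin

type_synonym 'a sgraph = "'a set \<times> 'a set set"

definition verts :: "'a sgraph \<Rightarrow> 'a set" where "verts G = fst G"
definition edges :: "'a sgraph \<Rightarrow> 'a set set" where "edges G = snd G"

definition sgraph :: "'a sgraph \<Rightarrow> bool" where
  "sgraph G \<longleftrightarrow> finite (verts G) \<and>
     (\<forall>e\<in>edges G. \<exists>u v. e = {u, v} \<and> u \<noteq> v \<and> u \<in> verts G \<and> v \<in> verts G)"

definition adj :: "'a sgraph \<Rightarrow> 'a \<Rightarrow> 'a \<Rightarrow> bool" where
  "adj G u v \<longleftrightarrow> {u, v} \<in> edges G"

definition reachable :: "'a sgraph \<Rightarrow> 'a \<Rightarrow> 'a \<Rightarrow> bool" where
  "reachable G = (adj G)\<^sup>*\<^sup>*"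

definition connected :: "'a sgraph \<Rightarrow> bool" where
  "connected G \<longleftrightarrow> (\<forall>u\<in>verts G. \<forall>v\<in>verts G. reachable G u v)"

definition component :: "'a sgraph \<Rightarrow> 'a \<Rightarrow> 'a set" where
  "component G v = {u \<in> verts G. reachable G v u}"

definition nontrivial :: "'a sgraph \<Rightarrow> bool" where
  "nontrivial G \<longleftrightarrow> card (verts G) \<ge> 2"

definition num_edges :: "'a sgraph \<Rightarrow> nat" where
  "num_edges G = card (edges G)"

definition degree :: "'a sgraph \<Rightarrow> 'a \<Rightarrow> nat" where
  "degree G v = card {e \<in> edges G. v \<in> e}"

definition min_degree :: "'a sgraph \<Rightarrow> nat" where
  "min_degree G = Min (degree G ` verts G)"

definition min_edge_degree :: "'a sgraph \<Rightarrow> nat" where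
  "min_edge_degree G =
     Min {degree G u + degree G v - 2 | u v. {u, v} \<in> edges G \<and> u \<noteq> v}"

definition del_edges :: "'a sgraph \<Rightarrow> 'a set set \<Rightarrow> 'a sgraph" where
  "del_edges G S = (verts G, edges G - S)"

definition edge_cut :: "'a sgraph \<Rightarrow> 'a set set \<Rightarrow> bool" where
  "edge_cut G S \<longleftrightarrow> S \<subseteq> edges G \<and> \<not> connected (del_edges G S)"

definition edge_connectivity :: "'a sgraph \<Rightarrow> nat" where
  "edge_connectivity G = Min (card ` {S. edge_cut G S})"

definition restricted_edge_cut :: "'a sgraph \<Rightarrow> 'a set set \<Rightarrow> bool" where
  "restricted_edge_cut G S \<longleftrightarrow> edge_cut G S \<and>
     (\<forall>v\<in>verts G. card (component (del_edges G S) v) \<ge> 2)"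

definition restricted_edge_connectivity :: "'a sgraph \<Rightarrow> nat" where
  "restricted_edge_connectivity G = Min (card ` {S. restricted_edge_cut G S})"

definition super_restricted_edge_connected :: "'a sgraph \<Rightarrow> bool" where
  "super_restricted_edge_connected G \<longleftrightarrow>
     (\<forall>S. restricted_edge_cut G S \<and> card S = restricted_edge_connectivity G \<longrightarrow>
        (\<exists>v\<in>verts G. card (component (del_edges G S) v) = 2))"

definition strong_product :: "'a sgraph \<Rightarrow> 'b sgraph \<Rightarrow> ('a \<times> 'b) sgraph" where
  "strong_product G H = (verts G \<times> verts H,
     {{(x1, y1), (x2, y2)} | x1 y1 x2 y2.
        x1 \<in> verts G \<and> x2 \<in> verts G \<and> y1 \<in> verts H \<and> y2 \<in> verts H \<and>
        ((x1 = x2 \<and> {y1, y2} \<in> edges H) \<or>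
         (y1 = y2 \<and> {x1, x2} \<in> edges G) \<or>
         ({x1, x2} \<in> edges G \<and> {y1, y2} \<in> edges H))})"

definition path_graph :: "nat \<Rightarrow> nat sgraph" where
  "path_graph n = ({0..<n}, {{i, Suc i} | i. Suc i < n})"

end

theory Submission
  imports Defs
begin

definition nb :: "'a sgraph \<Rightarrow> 'a \<Rightarrow> 'a set" where
  "nb H x = {y. {x, y} \<in> edges H}"

definition bdH :: "'a sgraph \<Rightarrow> 'a set \<Rightarrow> 'a set set" where
  "bdH H U = {e \<in> edges H. \<exists>p q. e = {p, q} \<and> p \<in> U \<and> q \<notin> U}"

lemma sgraph_edgeD:
  assumes "sgraph H" "{x, y} \<in> edges H"
  shows "x \<noteq> y" "x \<in> verts H" "y \<in> verts H"
proof -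
  obtain u v where "{x, y} = {u, v}" "u \<noteq> v" "u \<in> verts H" "v \<in> verts H"
    using assms unfolding sgraph_def by meson
  then have "(x = u \<and> y = v) \<or> (x = v \<and> y = u)" by (simp add: doubleton_eq_iff)
  then show "x \<noteq> y" "x \<in> verts H" "y \<in> verts H" using \<open>u \<noteq> v\<close> \<open>u \<in> verts H\<close> \<open>v \<in> verts H\<close> by auto
qed
lemma nb_sym: "y \<in> nb H x \<longleftrightarrow> x \<in> nb H y"
  by (simp add: nb_def insert_commute)

lemma nb_sub: "sgraph H \<Longrightarrow> nb H x \<subseteq> verts H"
proof
  fix y assume "sgraph H" "y \<in> nb H x"
  then show "y \<in> verts H" unfolding nb_def by (metis mem_Collect_eq sgraph_edgeD(3))
qed

lemma nb_irr: "sgraph H \<Longrightarrow> x \<notin> nb H x"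
  unfolding nb_def by (metis mem_Collect_eq sgraph_edgeD(1))

lemma fin_verts: "sgraph H \<Longrightarrow> finite (verts H)"
  unfolding sgraph_def by (rule conjunct1)

lemma fin_nb: "sgraph H \<Longrightarrow> finite (nb H x)"
  using nb_sub fin_verts finite_subset by metis

lemma sgraph_edge_obtain:
  assumes "sgraph H" "e \<in> edges H"
  obtains u v where "e = {u, v}" "u \<noteq> v" "u \<in> verts H" "v \<in> verts H"
  using assms unfolding sgraph_def by meson

lemma edges_sub: "sgraph H \<Longrightarrow> edges H \<subseteq> Pow (verts H)"
proof
  fix e assume "sgraph H" "e \<in> edges H"
  then obtain u v where "e = {u, v}" "u \<in> verts H" "v \<in> verts H" by (rule sgraph_edge_obtain)
  then show "e \<in> Pow (verts H)" by simp
qed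

lemma fin_edges: "sgraph H \<Longrightarrow> finite (edges H)"
  using edges_sub fin_verts by (metis finite_Pow_iff finite_subset)

lemma degree_nb:
  assumes "sgraph H" shows "degree H x = card (nb H x)"
proof -
  have "(\<lambda>y. {x, y}) ` nb H x = {e \<in> edges H. x \<in> e}"
  proof
    show "(\<lambda>y. {x, y}) ` nb H x \<subseteq> {e \<in> edges H. x \<in> e}" by (auto simp: nb_def)
    show "{e \<in> edges H. x \<in> e} \<subseteq> (\<lambda>y. {x, y}) ` nb H x"
    proof
      fix e assume e: "e \<in> {e \<in> edges H. x \<in> e}"
      then obtain u v where "e = {u, v}" using assms sgraph_edge_obtain by (metis (no_types, lifting) mem_Collect_eq)
      with e show "e \<in> (\<lambda>y. {x, y}) ` nb H x"
        by (auto simp: nb_def insert_commute)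
    qed
  qed
  moreover have "inj_on (\<lambda>y. {x, y}) (nb H x)"
    by (auto simp: inj_on_def doubleton_eq_iff)
  ultimately show ?thesis unfolding degree_def by (metis card_image)
qed

lemma card_bdH:
  assumes "sgraph H" "U \<subseteq> verts H"
  shows "card (bdH H U) = (\<Sum>p\<in>U. card (nb H p - U))"
proof -
  have fU: "finite U" using assms fin_verts finite_subset by blast
  have eq: "bdH H U = (\<Union>p\<in>U. (\<lambda>q. {p, q}) ` (nb H p - U))"
    by (auto simp: bdH_def nb_def)
  have "card (\<Union>p\<in>U. (\<lambda>q. {p, q}) ` (nb H p - U)) = (\<Sum>p\<in>U. card ((\<lambda>q. {p, q}) ` (nb H p - U)))"
    apply (rule card_UN_disjoint)
    using fU fin_nb[OF assms(1)] by (auto simp: doubleton_eq_iff)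
  also have "\<dots> = (\<Sum>p\<in>U. card (nb H p - U))"
    apply (rule sum.cong, simp)
    apply (rule card_image)
    by (auto simp: inj_on_def doubleton_eq_iff)
  finally show ?thesis using eq by simp
qed

lemma adj_del: "adj (del_edges H S) u v \<longleftrightarrow> {u, v} \<in> edges H \<and> {u, v} \<notin> S"
  by (simp add: adj_def del_edges_def edges_def)

lemma verts_del [simp]: "verts (del_edges H S) = verts H"
  by (simp add: del_edges_def verts_def)

lemma reach_stay:
  assumes "reachable (del_edges H (bdH H U)) u w" "u \<in> U"
  shows "w \<in> U"
  using assms unfolding reachable_def
proof (induction rule: rtranclp_induct)
  case base then show ?case by simp
next
  case (step y z)
  then have "{y, z} \<in> edges H" "{y, z} \<notin> bdH H U" by (auto simp: adj_del)
  with step show ?case by (auto simp: bdH_def)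
qed

lemma bdH_disconn:
  assumes "u \<in> U" "u \<in> verts H" "w \<in> verts H" "w \<notin> U"
  shows "\<not> connected (del_edges H (bdH H U))"
  using reach_stay assms unfolding connected_def by fastforce

lemma bdH_sub: "bdH H U \<subseteq> edges H" by (auto simp: bdH_def)

lemma reach_sym:
  assumes "reachable H u w" shows "reachable H w u"
proof -
  have "symp (adj H)" by (auto simp: symp_def adj_def insert_commute)
  then show ?thesis using assms unfolding reachable_def by (meson sympD symp_rtranclp)
qed

lemma reach_trans: "reachable H u v \<Longrightarrow> reachable H v w \<Longrightarrow> reachable H u w"
  unfolding reachable_def by simp

lemma reach_verts:
  assumes "sgraph H" "reachable (del_edges H S) u w" "u \<noteq> w"
  shows "w \<in> verts H"
  using assms(2,3) unfolding reachable_def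
proof (induction rule: rtranclp_induct)
  case base then show ?case by simp
next
  case (step y z)
  then have "{y, z} \<in> edges H" by (simp add: adj_del)
  then show ?case using sgraph_edgeD(3)[OF assms(1)] by blast
qed


definition nbc :: "'a sgraph \<Rightarrow> 'a \<Rightarrow> 'a set" where
  "nbc H x = insert x (nb H x)"
definition ci :: "'a sgraph \<Rightarrow> 'a set \<Rightarrow> nat" where
  "ci H A = (\<Sum>x\<in>A. card (nb H x - A))"
definition Rr :: "'a sgraph \<Rightarrow> ('a \<times> 'a) set" where
  "Rr H = {(x, y). x \<in> verts H \<and> y \<in> nbc H x}"
definition Eo :: "'a sgraph \<Rightarrow> ('a \<times> 'a) set" where
  "Eo H = {(x, y). x \<in> verts H \<and> y \<in> nb H x}"
definition crs :: "'a sgraph \<Rightarrow> 'a set \<Rightarrow> 'a set \<Rightarrow> nat" where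
  "crs H A B = card {p \<in> Rr H. (fst p \<in> A) \<noteq> (snd p \<in> B)}"
definition Lset :: "'a sgraph \<Rightarrow> 'a \<Rightarrow> nat \<Rightarrow> nat \<Rightarrow> 'a set" where
  "Lset H x k l = (if l = k then nb H x else if l = Suc k \<or> k = Suc l then nbc H x else {})"
definition Mm :: "'a sgraph \<Rightarrow> (nat \<Rightarrow> 'a set) \<Rightarrow> nat \<Rightarrow> nat \<Rightarrow> nat" where
  "Mm H al k l = (\<Sum>x\<in>al k. card (Lset H x k l - al l))"
definition tot :: "'a sgraph \<Rightarrow> nat \<Rightarrow> (nat \<Rightarrow> 'a set) \<Rightarrow> nat" where
  "tot H n al = (\<Sum>p\<in>{..<n} \<times> {..<n}. Mm H al (fst p) (snd p))"

context
  fixes G :: "'a sgraph"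
  assumes sg: "sgraph G"
begin

lemma nbc_sub: "x \<in> verts G \<Longrightarrow> nbc G x \<subseteq> verts G"
  using nb_sub[OF sg] by (auto simp: nbc_def)

lemma fin_nbc: "finite (nbc G x)"
  using fin_nb[OF sg] by (simp add: nbc_def)

lemma card_nbc: "card (nbc G x) = Suc (card (nb G x))"
  using fin_nb[OF sg] nb_irr[OF sg] by (simp add: nbc_def)

lemma nbc_sym: "y \<in> nbc G x \<longleftrightarrow> x \<in> nbc G y"
  unfolding nbc_def by (metis insert_iff nb_sym)

lemma nbc_mem: "x \<in> verts G \<Longrightarrow> y \<in> nbc G x \<Longrightarrow> y \<in> verts G"
  using nbc_sub by blast

lemma fin_V: "finite (verts G)" using fin_verts[OF sg] .

lemma handshake: "(\<Sum>x\<in>verts G. card (nb G x)) = 2 * card (edges G)"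
proof -
  have fE: "finite (edges G)" using fin_edges[OF sg] .
  have "(\<Sum>x\<in>verts G. card (nb G x)) = (\<Sum>x\<in>verts G. \<Sum>e\<in>edges G. (of_bool (x \<in> e) :: nat))"
    apply (rule sum.cong, simp)
    using fE degree_nb[OF sg] by (simp add: degree_def Int_def)
  also have "\<dots> = (\<Sum>e\<in>edges G. \<Sum>x\<in>verts G. (of_bool (x \<in> e) :: nat))"
    by (rule sum.swap)
  also have "\<dots> = (\<Sum>e\<in>edges G. 2)"
  proof (rule sum.cong, simp)
    fix e assume e: "e \<in> edges G"
    then obtain u v where uv: "e = {u, v}" "u \<noteq> v" "u \<in> verts G" "v \<in> verts G"
      using sg sgraph_edge_obtain by blast
    have c: "verts G \<inter> {x. x \<in> e} = {u, v}" using uv by auto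
    have "(\<Sum>x\<in>verts G. (of_bool (x \<in> e) :: nat)) = card (verts G \<inter> {x. x \<in> e})"
      using fin_V by simp
    also have "\<dots> = 2" unfolding c using uv(2) by simp
    finally show "(\<Sum>x\<in>verts G. (of_bool (x \<in> e) :: nat)) = 2" .
  qed
  finally show ?thesis by simp
qed

lemma Rr_Sigma: "Rr G = (SIGMA x:verts G. nbc G x)"
  by (auto simp: Rr_def)

lemma fin_Rr: "finite (Rr G)"
  unfolding Rr_Sigma using fin_V fin_nbc by simp

lemma card_Rr: "card (Rr G) = card (verts G) + 2 * card (edges G)"
proof -
  have "card (Rr G) = (\<Sum>x\<in>verts G. card (nbc G x))"
    unfolding Rr_Sigma using fin_V fin_nbc by simp
  also have "\<dots> = (\<Sum>x\<in>verts G. 1 + card (nb G x))" by (rule sum.cong) (simp_all add: card_nbc)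
  also have "\<dots> = (\<Sum>x\<in>verts G. 1) + (\<Sum>x\<in>verts G. card (nb G x))" by (rule sum.distrib)
  also have "\<dots> = card (verts G) + 2 * card (edges G)"
    by (simp add: handshake)
  finally show ?thesis .
qed

lemma Rr_sym: "(x, y) \<in> Rr G \<Longrightarrow> (y, x) \<in> Rr G"
  unfolding Rr_def using nbc_sub nbc_sym by auto

lemma Lset_same: "Lset G x k k = nb G x" by (simp add: Lset_def)
lemma Lset_up: "Lset G x k (Suc k) = nbc G x" by (simp add: Lset_def)
lemma Lset_down: "Lset G x (Suc k) k = nbc G x" by (simp add: Lset_def)
lemma Lset_far: "l \<noteq> k \<Longrightarrow> l \<noteq> Suc k \<Longrightarrow> k \<noteq> Suc l \<Longrightarrow> Lset G x k l = {}"
  by (simp add: Lset_def)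
lemma fin_Lset: "finite (Lset G x k l)"
  using fin_nb[OF sg] fin_nbc by (simp add: Lset_def)

lemma Mm_same: "Mm G al k k = ci G (al k)"
  by (simp add: Mm_def ci_def Lset_same)

lemma crs_eq:
  assumes "A \<subseteq> verts G" "B \<subseteq> verts G"
  shows "(\<Sum>x\<in>A. card (nbc G x - B)) + (\<Sum>y\<in>B. card (nbc G y - A)) = crs G A B"
proof -
  have fA: "finite A" "finite B" using assms fin_V finite_subset by auto
  have e1: "(\<Sum>x\<in>A. card (nbc G x - B)) = card (SIGMA x:A. nbc G x - B)"
    using fA fin_nbc by simp
  have e2: "(\<Sum>y\<in>B. card (nbc G y - A)) = card (SIGMA y:B. nbc G y - A)"
    using fA fin_nbc by simp
  also have "\<dots> = card ((\<lambda>(y, x). (x, y)) ` (SIGMA y:B. nbc G y - A))"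
    by (rule card_image[symmetric]) (auto simp: inj_on_def)
  finally have e2': "(\<Sum>y\<in>B. card (nbc G y - A)) = card ((\<lambda>(y, x). (x, y)) ` (SIGMA y:B. nbc G y - A))" .
  have un: "{p \<in> Rr G. (fst p \<in> A) \<noteq> (snd p \<in> B)} =
      (SIGMA x:A. nbc G x - B) \<union> ((\<lambda>(y, x). (x, y)) ` (SIGMA y:B. nbc G y - A))"
  proof (rule set_eqI)
    fix p :: "'a \<times> 'a"
    obtain x y where p: "p = (x, y)" by (cases p)
    show "p \<in> {p \<in> Rr G. (fst p \<in> A) \<noteq> (snd p \<in> B)} \<longleftrightarrow>
      p \<in> (SIGMA x:A. nbc G x - B) \<union> ((\<lambda>(y, x). (x, y)) ` (SIGMA y:B. nbc G y - A))"
      unfolding p using assms nbc_sub nbc_sym by (auto simp: Rr_def image_iff)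
  qed
  have "card {p \<in> Rr G. (fst p \<in> A) \<noteq> (snd p \<in> B)} =
      card (SIGMA x:A. nbc G x - B) + card ((\<lambda>(y, x). (x, y)) ` (SIGMA y:B. nbc G y - A))"
    unfolding un
    apply (rule card_Un_disjoint)
    using fA fin_nbc by auto
  then show ?thesis unfolding crs_def e1 e2' by simp
qed

lemma Mm_pair:
  assumes "al k \<subseteq> verts G" "al (Suc k) \<subseteq> verts G"
  shows "Mm G al k (Suc k) + Mm G al (Suc k) k = crs G (al k) (al (Suc k))"
  unfolding Mm_def Lset_up Lset_down using crs_eq[OF assms] .

lemma crs_compl:
  assumes "A \<subseteq> verts G" "B \<subseteq> verts G"
  shows "crs G (verts G - A) (verts G - B) = crs G A B"
proof -
  have "{p \<in> Rr G. (fst p \<in> verts G - A) \<noteq> (snd p \<in> verts G - B)} = {p \<in> Rr G. (fst p \<in> A) \<noteq> (snd p \<in> B)}"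
    using nbc_mem by (auto simp: Rr_def)
  then show ?thesis by (simp add: crs_def)
qed

end

lemma arith1:
  fixes a b d :: nat
  assumes "1 \<le> a" "1 \<le> b"
  shows "2 * d \<le> a * (1 + (d - b)) + b * (1 + (d - a))"
proof (cases "d \<le> a")
  case True
  show ?thesis
  proof (cases "d \<le> b")
    case True
    then show ?thesis using \<open>d \<le> a\<close> by (simp add: algebra_simps)
  next
    case False
    then have "2 \<le> 1 + (d - b)" by simp
    then have "d * 2 \<le> a * (1 + (d - b))" using True by (rule mult_le_mono[rotated])
    then show ?thesis by simp
  qed
next
  case False
  show ?thesis
  proof (cases "d \<le> b")
    case True
    have "2 \<le> 1 + (d - a)" using False by simp
    then have "d * 2 \<le> b * (1 + (d - a))" using True by (rule mult_le_mono[rotated])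
    then show ?thesis by simp
  next
    case False2: False
    define s where "s = d - a"
    define t where "t = d - b"
    have s: "d = a + s" "1 \<le> s" using False by (simp_all add: s_def)
    have t: "d = b + t" "1 \<le> t" using False2 by (simp_all add: t_def)
    have "int (2 * d) \<le> int (a * (1 + t) + b * (1 + s))"
    proof -
      have h1: "(int a - 1) * (int t - 1) \<ge> 0" "(int b - 1) * (int s - 1) \<ge> 0" using assms s t by simp_all
      have "int (a * (1 + t) + b * (1 + s)) - int (2 * d) = (int a - 1) * (int t - 1) + (int b - 1) * (int s - 1) + (int a + int b - 2)"
        using s t by (simp add: algebra_simps)
      then show ?thesis using h1 assms by linarith
    qed
    then have "2 * d \<le> a * (1 + t) + b * (1 + s)" by (simp only: of_nat_le_iff)
    then show ?thesis by (simp add: s_def[symmetric] t_def[symmetric])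
  qed
qed


context
  fixes G :: "'a sgraph"
  assumes sg: "sgraph G" and conn: "connected G" and ntr: "nontrivial G"
begin

lemma single_ne: "2 \<le> card V \<Longrightarrow> {x} \<noteq> V"
proof
  assume a: "2 \<le> card V" "{x} = V"
  from a(2) have "V = {x}" by (rule sym)
  then have "card V = 1" by simp
  with a(1) show False by simp
qed

lemma two_verts: "2 \<le> card (verts G)" using ntr by (simp add: nontrivial_def)

lemma verts_ne: "verts G \<noteq> {}"
proof
  assume "verts G = {}"
  then have "card (verts G) = 0" by simp
  then show False using two_verts by simp
qed

lemma ex_vert: obtains x where "x \<in> verts G"
  using verts_ne by blast

lemma other_vert: "x \<in> verts G \<Longrightarrow> \<exists>y\<in>verts G. y \<noteq> x"
proof (rule ccontr)
  assume "x \<in> verts G" "\<not> (\<exists>y\<in>verts G. y \<noteq> x)"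
  then have "verts G = {x}" by blast
  then have "card (verts G) = 1" by simp
  then show False using two_verts by simp
qed

lemma nb_ne: assumes "x \<in> verts G" shows "nb G x \<noteq> {}"
proof -
  obtain y where y: "y \<in> verts G" "y \<noteq> x" using other_vert[OF assms] by blast
  have "reachable G x y" using conn assms y(1) unfolding connected_def by blast
  then have r: "(adj G)\<^sup>*\<^sup>* x y" unfolding reachable_def .
  have "\<exists>z. adj G x z"
    using r
  proof (cases rule: converse_rtranclpE)
    case base then show ?thesis using y(2) by simp
  next
    case (step z) then show ?thesis by blast
  qed
  then obtain z where "adj G x z" by blast
  then show ?thesis by (auto simp: nb_def adj_def)
qed

lemma fin_cuts: "finite (card ` {S. edge_cut G S})"
proof -
  have "{S. edge_cut G S} \<subseteq> Pow (edges G)" by (auto simp: edge_cut_def)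
  moreover have "finite (Pow (edges G))" using fin_edges[OF sg] by simp
  ultimately have "finite {S. edge_cut G S}" by (rule finite_subset)
  then show ?thesis by simp
qed

lemma ci_card: "U \<subseteq> verts G \<Longrightarrow> ci G U = card (bdH G U)"
  using card_bdH[OF sg] by (simp add: ci_def)

lemma bdH_cut:
  assumes "U \<subseteq> verts G" "U \<noteq> {}" "U \<noteq> verts G"
  shows "edge_cut G (bdH G U)"
proof -
  obtain u where "u \<in> U" using assms by blast
  obtain w where "w \<in> verts G" "w \<notin> U" using assms by blast
  moreover have "u \<in> verts G" using \<open>u \<in> U\<close> assms(1) by blast
  ultimately have "\<not> connected (del_edges G (bdH G U))" using bdH_disconn[of u U G w] \<open>u \<in> U\<close> by blast
  then show ?thesis unfolding edge_cut_def using bdH_sub by blast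
qed

lemma lam_le_ci:
  assumes "U \<subseteq> verts G" "U \<noteq> {}" "U \<noteq> verts G"
  shows "edge_connectivity G \<le> ci G U"
proof -
  have "card (bdH G U) \<in> card ` {S. edge_cut G S}" using bdH_cut[OF assms] by blast
  then have "Min (card ` {S. edge_cut G S}) \<le> card (bdH G U)" using fin_cuts by (rule Min_le[rotated])
  then show ?thesis unfolding edge_connectivity_def ci_card[OF assms(1)] .
qed

lemma lam_ge1: "1 \<le> edge_connectivity G"
proof -
  obtain x where x: "x \<in> verts G" using ex_vert by blast
  have ne: "{S. edge_cut G S} \<noteq> {}"
  proof -
    have "{x} \<noteq> verts G" using single_ne[OF two_verts] .
    then have "edge_cut G (bdH G {x})" using bdH_cut[of "{x}"] x by simp
    then show ?thesis by blast
  qed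
  have "\<forall>S. edge_cut G S \<longrightarrow> 1 \<le> card S"
  proof (intro allI impI)
    fix S assume S: "edge_cut G S"
    then have fS: "finite S" using fin_edges[OF sg] by (meson edge_cut_def finite_subset)
    show "1 \<le> card S"
    proof (rule ccontr)
      assume "\<not> 1 \<le> card S"
      then have "card S = 0" by simp
      then have "S = {}" using fS by simp
      then have "del_edges G S = G" by (simp add: del_edges_def verts_def edges_def)
      then show False using S conn by (simp add: edge_cut_def)
    qed
  qed
  moreover have "Min (card ` {S. edge_cut G S}) \<in> card ` {S. edge_cut G S}"
    using ne fin_cuts by (intro Min_in) simp_all
  moreover obtain S where "edge_cut G S" "Min (card ` {S. edge_cut G S}) = card S"
    using calculation(2) by (metis (no_types, lifting) imageE mem_Collect_eq)
  ultimately show ?thesis unfolding edge_connectivity_def by simp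
qed

lemma dl_le: assumes "x \<in> verts G" shows "min_degree G \<le> card (nb G x)"
proof -
  have "degree G x \<in> degree G ` verts G" using assms by simp
  moreover have "finite (degree G ` verts G)" using fin_V[OF sg] by simp
  ultimately have "Min (degree G ` verts G) \<le> degree G x" by (rule Min_le[rotated])
  then show ?thesis unfolding min_degree_def degree_nb[OF sg] .
qed

lemma dl_ex: "\<exists>x\<in>verts G. card (nb G x) = min_degree G"
proof -
  have "verts G \<noteq> {}" using verts_ne .
  then have "min_degree G \<in> degree G ` verts G" unfolding min_degree_def using fin_V[OF sg] by simp
  then show ?thesis using degree_nb[OF sg] by auto
qed

lemma dl_ge1: "1 \<le> min_degree G"
proof -
  obtain x where x: "x \<in> verts G" "card (nb G x) = min_degree G" using dl_ex by blast
  have "card (nb G x) \<noteq> 0" using nb_ne[OF x(1)] fin_nb[OF sg] by simp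
  then show ?thesis using x by simp
qed

lemma lam_le_dl: "edge_connectivity G \<le> min_degree G"
proof -
  obtain x where x: "x \<in> verts G" "card (nb G x) = min_degree G" using dl_ex by blast
  have "{x} \<noteq> verts G" using single_ne[OF two_verts] .
  then have "edge_connectivity G \<le> ci G {x}" using lam_le_ci[of "{x}"] x by auto
  also have "ci G {x} = card (nb G x)" using nb_irr[OF sg] by (simp add: ci_def)
  finally show ?thesis using x by simp
qed

definition edset where "edset = {degree G u + degree G v - 2 | u v. {u, v} \<in> edges G \<and> u \<noteq> v}"

lemma fin_edset: "finite edset"
proof -
  have "edset \<subseteq> (\<lambda>(u, v). degree G u + degree G v - 2) ` (verts G \<times> verts G)"
  proof
    fix z assume "z \<in> edset"
    then obtain u v where uv: "z = degree G u + degree G v - 2" "{u, v} \<in> edges G" unfolding edset_def by blast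
    then have "u \<in> verts G" "v \<in> verts G" using sgraph_edgeD(2,3)[OF sg] by blast+
    then show "z \<in> (\<lambda>(u, v). degree G u + degree G v - 2) ` (verts G \<times> verts G)" using uv by force
  qed
  then show ?thesis using fin_V[OF sg] by (meson finite_SigmaI finite_imageI finite_subset)
qed

lemma xi_le: "{x, y} \<in> edges G \<Longrightarrow> min_edge_degree G + 2 \<le> card (nb G x) + card (nb G y)"
proof -
  assume e: "{x, y} \<in> edges G"
  then have "x \<noteq> y" using sgraph_edgeD(1)[OF sg] by blast
  then have "degree G x + degree G y - 2 \<in> edset" using e unfolding edset_def by blast
  then have "min_edge_degree G \<le> degree G x + degree G y - 2"
    unfolding min_edge_degree_def edset_def[symmetric] using fin_edset by simp
  moreover have "1 \<le> card (nb G x)" "1 \<le> card (nb G y)"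
    using dl_ge1 dl_le e sgraph_edgeD(2,3)[OF sg] by (meson le_trans)+
  ultimately show ?thesis using degree_nb[OF sg] by simp
qed

lemma xi_ex: "\<exists>x y. {x, y} \<in> edges G \<and> card (nb G x) + card (nb G y) = min_edge_degree G + 2"
proof -
  obtain x where x: "x \<in> verts G" using ex_vert by blast
  then obtain y where "y \<in> nb G x" using nb_ne by blast
  then have e: "{x, y} \<in> edges G" "x \<noteq> y" using nb_irr[OF sg] by (auto simp: nb_def)
  then have "edset \<noteq> {}" unfolding edset_def by blast
  then have "min_edge_degree G \<in> edset" unfolding min_edge_degree_def edset_def[symmetric] using fin_edset by simp
  then obtain u v where uv: "min_edge_degree G = degree G u + degree G v - 2" "{u, v} \<in> edges G" "u \<noteq> v"
    unfolding edset_def by blast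
  moreover have "1 \<le> card (nb G u)" "1 \<le> card (nb G v)"
    using dl_ge1 dl_le uv sgraph_edgeD(2,3)[OF sg] by (meson le_trans)+
  ultimately have "card (nb G u) + card (nb G v) = min_edge_degree G + 2" using degree_nb[OF sg] by simp
  then show ?thesis using uv by blast
qed

end


context
  fixes G :: "'a sgraph"
  assumes sg: "sgraph G"
begin

lemma Eo_sub: "Eo G \<subseteq> Rr G" by (auto simp: Eo_def Rr_def nbc_def)
lemma fin_Eo: "finite (Eo G)" using Eo_sub fin_Rr[OF sg] finite_subset by blast
lemma Eo_swap: assumes "p \<in> Eo G" shows "(snd p, fst p) \<in> Eo G"
proof -
  obtain x y where p: "p = (x, y)" by (cases p)
  have h: "x \<in> verts G" "y \<in> nb G x" using assms p by (simp_all add: Eo_def)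
  have "y \<in> verts G" using nb_sub[OF sg] h(2) by blast
  moreover have "x \<in> nb G y" using h(2) nb_sym by metis
  ultimately show ?thesis using p by (simp add: Eo_def)
qed

lemma sum_swap_Eo: "(\<Sum>p\<in>Eo G. h p) = (\<Sum>p\<in>Eo G. h (snd p, fst p))"
proof -
  have "(\<Sum>p\<in>Eo G. h (snd p, fst p)) = (\<Sum>p\<in>(\<lambda>p. (snd p, fst p)) ` Eo G. h p)"
    by (rule sum.reindex[symmetric, unfolded comp_def]) (auto simp: inj_on_def)
  moreover have "(\<lambda>p. (snd p, fst p)) ` Eo G = Eo G"
  proof
    show "(\<lambda>p. (snd p, fst p)) ` Eo G \<subseteq> Eo G" using Eo_swap by auto
    show "Eo G \<subseteq> (\<lambda>p. (snd p, fst p)) ` Eo G"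
    proof
      fix p assume "p \<in> Eo G"
      then have "(snd p, fst p) \<in> Eo G" by (rule Eo_swap)
      moreover have "p = (\<lambda>p. (snd p, fst p)) (snd p, fst p)" by simp
      ultimately show "p \<in> (\<lambda>p. (snd p, fst p)) ` Eo G" by blast
    qed
  qed
  ultimately show ?thesis by simp
qed

lemma card_Eo_filter: "card {p \<in> Eo G. P p} = (\<Sum>p\<in>Eo G. (of_bool (P p) :: nat))"
  using fin_Eo by (simp add: Int_def)

lemma ci_Eo: assumes "U \<subseteq> verts G"
  shows "ci G U = (\<Sum>p\<in>Eo G. (of_bool (fst p \<in> U \<and> snd p \<notin> U) :: nat))"
proof -
  have fU: "finite U" using assms fin_V[OF sg] finite_subset by blast
  have "ci G U = card (SIGMA x:U. nb G x - U)" unfolding ci_def using fU fin_nb[OF sg] by simp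
  also have "(SIGMA x:U. nb G x - U) = {p \<in> Eo G. fst p \<in> U \<and> snd p \<notin> U}"
    using assms by (auto simp: Eo_def)
  finally show ?thesis using card_Eo_filter by simp
qed

lemma crs_ge_UW:
  assumes A: "A \<subseteq> verts G" and B: "B \<subseteq> verts G"
  shows "ci G (A \<inter> B) + ci G (A \<union> B) \<le> crs G A B"
proof -
  define U where "U = A \<inter> B"
  define W where "W = A \<union> B"
  have UV: "U \<subseteq> verts G" "W \<subseteq> verts G" using A B by (auto simp: U_def W_def)
  define f where "f p = (of_bool ((fst p \<in> A) \<noteq> (snd p \<in> B)) :: nat)" for p
  define hU where "hU p = (of_bool (fst p \<in> U \<and> snd p \<notin> U) :: nat)" for p
  define hW where "hW p = (of_bool (fst p \<in> W \<and> snd p \<notin> W) :: nat)" for p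
  have pw: "hU p + hU (snd p, fst p) + hW p + hW (snd p, fst p) \<le> f p + f (snd p, fst p)" for p
    unfolding hU_def hW_def f_def U_def W_def by (cases "fst p \<in> A"; cases "fst p \<in> B"; cases "snd p \<in> A"; cases "snd p \<in> B") auto
  have "2 * (ci G U + ci G W) = (\<Sum>p\<in>Eo G. hU p) + (\<Sum>p\<in>Eo G. hU (snd p, fst p)) + (\<Sum>p\<in>Eo G. hW p) + (\<Sum>p\<in>Eo G. hW (snd p, fst p))"
    unfolding ci_Eo[OF UV(1)] ci_Eo[OF UV(2)] hU_def hW_def
    using sum_swap_Eo[of "\<lambda>p. (of_bool (fst p \<in> U \<and> snd p \<notin> U) :: nat)"]
      sum_swap_Eo[of "\<lambda>p. (of_bool (fst p \<in> W \<and> snd p \<notin> W) :: nat)"] by simp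
  also have "\<dots> = (\<Sum>p\<in>Eo G. hU p + hU (snd p, fst p) + hW p + hW (snd p, fst p))"
    by (simp add: sum.distrib)
  also have "\<dots> \<le> (\<Sum>p\<in>Eo G. f p + f (snd p, fst p))"
    by (rule sum_mono) (rule pw)
  also have "\<dots> = (\<Sum>p\<in>Eo G. f p) + (\<Sum>p\<in>Eo G. f (snd p, fst p))" by (simp add: sum.distrib)
  also have "\<dots> = 2 * (\<Sum>p\<in>Eo G. f p)" using sum_swap_Eo[of f] by simp
  finally have le: "ci G U + ci G W \<le> (\<Sum>p\<in>Eo G. f p)" by simp
  have "(\<Sum>p\<in>Eo G. f p) = card {p \<in> Eo G. (fst p \<in> A) \<noteq> (snd p \<in> B)}"
    unfolding f_def card_Eo_filter ..
  also have "\<dots> \<le> crs G A B" unfolding crs_def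
    apply (rule card_mono) using fin_Rr[OF sg] apply (simp)
    using Eo_sub by blast
  finally show ?thesis using le by (simp add: U_def W_def)
qed

end

context
  fixes G :: "'a sgraph"
  assumes sg: "sgraph G" and conn: "connected G" and ntr: "nontrivial G"
begin

lemma crs_disj:
  assumes A: "A \<subseteq> verts G" and B: "B \<subseteq> verts G" and d: "A \<inter> B = {}"
    and ne: "A \<noteq> {}" "B \<noteq> {}"
  shows "2 * min_degree G \<le> crs G A B"
proof -
  let ?d = "min_degree G"
  have fA: "finite A" "finite B" using A B fin_V[OF sg] finite_subset by auto
  have one: "1 + (?d - card Y) \<le> card (nbc G x - Y)" if "x \<in> verts G" "x \<notin> Y" "finite Y" for x Y
  proof -
    have "nbc G x - Y = insert x (nb G x - Y)" using that by (auto simp: nbc_def)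
    moreover have "x \<notin> nb G x - Y" using nb_irr[OF sg] by blast
    ultimately have c: "card (nbc G x - Y) = 1 + card (nb G x - Y)" using fin_nb[OF sg] by simp
    have "card (nb G x) - card Y \<le> card (nb G x - Y)" by (rule diff_card_le_card_Diff) (rule that(3))
    moreover have "?d \<le> card (nb G x)" by (rule dl_le[OF sg conn ntr that(1)])
    ultimately show ?thesis using c by linarith
  qed
  have s1: "card A * (1 + (?d - card B)) \<le> (\<Sum>x\<in>A. card (nbc G x - B))"
  proof -
    have "(\<Sum>x\<in>A. 1 + (?d - card B)) \<le> (\<Sum>x\<in>A. card (nbc G x - B))"
      apply (rule sum_mono) apply (rule one) using A d fA by auto
    then show ?thesis by simp
  qed
  have s2: "card B * (1 + (?d - card A)) \<le> (\<Sum>x\<in>B. card (nbc G x - A))"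
  proof -
    have "(\<Sum>x\<in>B. 1 + (?d - card A)) \<le> (\<Sum>x\<in>B. card (nbc G x - A))"
      apply (rule sum_mono) apply (rule one) using B d fA by auto
    then show ?thesis by simp
  qed
  have "2 * ?d \<le> card A * (1 + (?d - card B)) + card B * (1 + (?d - card A))"
    apply (rule arith1) using ne fA by (simp_all add: Suc_leI card_gt_0_iff)
  also have "\<dots> \<le> crs G A B" using s1 s2 crs_eq[OF sg A B] by linarith
  finally show ?thesis .
qed

lemma crs_2lam:
  assumes A: "A \<subseteq> verts G" "A \<noteq> {}" "A \<noteq> verts G"
    and B: "B \<subseteq> verts G" "B \<noteq> {}" "B \<noteq> verts G"
  shows "2 * edge_connectivity G \<le> crs G A B"
proof -
  let ?l = "edge_connectivity G"
  have ld: "?l \<le> min_degree G" by (rule lam_le_dl[OF sg conn ntr])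
  show ?thesis
  proof (cases "A \<inter> B = {}")
    case True
    then show ?thesis using crs_disj[OF A(1) B(1) True A(2) B(2)] ld by linarith
  next
    case False
    show ?thesis
    proof (cases "A \<union> B = verts G")
      case True
      have d: "(verts G - A) \<inter> (verts G - B) = {}" using True by blast
      have "2 * min_degree G \<le> crs G (verts G - A) (verts G - B)"
        apply (rule crs_disj[OF _ _ d]) using A B by auto
      then show ?thesis using crs_compl[OF sg A(1) B(1)] ld by linarith
    next
      case F2: False
      have "?l \<le> ci G (A \<inter> B)" apply (rule lam_le_ci[OF sg conn ntr]) using A False by auto
      moreover have "?l \<le> ci G (A \<union> B)" apply (rule lam_le_ci[OF sg conn ntr]) using A B F2 by auto
      ultimately show ?thesis using crs_ge_UW[OF sg A(1) B(1)] by linarith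
    qed
  qed
qed

end


lemma T2:
  assumes "P \<subseteq> {..<n} \<times> {..<n}"
  shows "(\<Sum>p\<in>P. Mm G al (fst p) (snd p)) \<le> tot G n al"
  unfolding tot_def by (rule sum_mono2) (use assms in auto)

lemma T1:
  "(\<Sum>k<n. Mm G al k k) + (\<Sum>k<n - 1. Mm G al k (Suc k) + Mm G al (Suc k) k) \<le> tot G n al"
proof -
  let ?M = "\<lambda>p. Mm G al (fst p) (snd p)"
  define Dg where "Dg = (\<lambda>k. (k, k)) ` {..<n}"
  define Up where "Up = (\<lambda>k. (k, Suc k)) ` {..<n - 1}"
  define Dn where "Dn = (\<lambda>k. (Suc k, k)) ` {..<n - 1}"
  have s1: "sum ?M Dg = (\<Sum>k<n. Mm G al k k)"
    unfolding Dg_def by (subst sum.reindex) (auto simp: inj_on_def)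
  have s2: "sum ?M Up = (\<Sum>k<n - 1. Mm G al k (Suc k))"
    unfolding Up_def by (subst sum.reindex) (auto simp: inj_on_def)
  have s3: "sum ?M Dn = (\<Sum>k<n - 1. Mm G al (Suc k) k)"
    unfolding Dn_def by (subst sum.reindex) (auto simp: inj_on_def)
  have fin: "finite Dg" "finite Up" "finite Dn" by (simp_all add: Dg_def Up_def Dn_def)
  have eq: "sum ?M (Dg \<union> Up \<union> Dn) = sum ?M Dg + sum ?M Up + sum ?M Dn"
    apply (subst sum.union_disjoint) using fin apply (simp_all add: Dg_def Up_def Dn_def)[3] apply auto[1]
    apply (subst sum.union_disjoint) using fin apply (simp_all add: Dg_def Up_def Dn_def) by auto
  have le0: "sum ?M (Dg \<union> Up \<union> Dn) \<le> tot G n al"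
    by (rule T2) (auto simp: Dg_def Up_def Dn_def)
  have le: "sum ?M Dg + sum ?M Up + sum ?M Dn \<le> tot G n al" using eq le0 by simp
  have "(\<Sum>k<n - 1. Mm G al k (Suc k) + Mm G al (Suc k) k) = (\<Sum>k<n - 1. Mm G al k (Suc k)) + (\<Sum>k<n - 1. Mm G al (Suc k) k)"
    by (rule sum.distrib)
  then show ?thesis using le s1 s2 s3 by linarith
qed

lemma ivt_up:
  fixes f :: "nat \<Rightarrow> bool"
  shows "i \<le> j \<Longrightarrow> f i \<noteq> f j \<Longrightarrow> \<exists>t. i \<le> t \<and> t < j \<and> f t \<noteq> f (Suc t)"
proof (induction j)
  case 0 then show ?case by simp
next
  case (Suc j)
  show ?case
  proof (cases "i = Suc j")
    case True then show ?thesis using Suc by simp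
  next
    case False
    then have "i \<le> j" using Suc by simp
    show ?thesis
    proof (cases "f j = f (Suc j)")
      case True
      then obtain t where "i \<le> t \<and> t < j \<and> f t \<noteq> f (Suc t)" using Suc.IH \<open>i \<le> j\<close> Suc.prems by auto
      then show ?thesis by (intro exI[of _ t]) simp
    next
      case False then show ?thesis using \<open>i \<le> j\<close> by (intro exI[of _ j]) simp
    qed
  qed
qed

lemma ivt:
  fixes f :: "nat \<Rightarrow> bool"
  assumes "f i \<noteq> f j"
  shows "\<exists>t. min i j \<le> t \<and> t < max i j \<and> f t \<noteq> f (Suc t)"
proof (cases "i \<le> j")
  case True then show ?thesis using ivt_up[OF True assms] by (simp add: min_def max_def)
next
  case False
  then have "j \<le> i" by simp
  from ivt_up[OF this, of f] assms obtain t where "j \<le> t \<and> t < i \<and> f t \<noteq> f (Suc t)" by auto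
  then show ?thesis using False by (intro exI[of _ t]) (simp add: min_def max_def)
qed

context
  fixes G :: "'a sgraph"
  assumes sg: "sgraph G"
begin

lemma sum_crs_le:
  assumes "\<forall>k<n. al k \<subseteq> verts G"
  shows "(\<Sum>k<n - 1. crs G (al k) (al (Suc k))) \<le> tot G n al"
proof -
  have "(\<Sum>k<n - 1. crs G (al k) (al (Suc k))) = (\<Sum>k<n - 1. Mm G al k (Suc k) + Mm G al (Suc k) k)"
    apply (rule sum.cong, simp) using Mm_pair[OF sg] assms by simp
  then show ?thesis using T1[where n=n and G=G and al=al] by linarith
qed

lemma Ga:
  assumes sub: "\<forall>k<n. al k \<subseteq> verts G" and ij: "i < n" "j < n"
    and full: "al i = verts G" and emp: "al j = {}"
  shows "card (Rr G) \<le> tot G n al"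
proof -
  define F where "F k = {p \<in> Rr G. (fst p \<in> al k) \<noteq> (snd p \<in> al (Suc k))}" for k
  define z where "z p t = (if even (t + i) then fst p else snd p)" for p :: "'a \<times> 'a" and t
  define g where "g p t = (z p t \<in> al t)" for p t
  define tt where "tt p = (SOME t. min i j \<le> t \<and> t < max i j \<and> g p t \<noteq> g p (Suc t))" for p
  define Phi where "Phi p = (tt p, (z p (tt p), z p (Suc (tt p))))" for p
  have tt: "min i j \<le> tt p \<and> tt p < max i j \<and> g p (tt p) \<noteq> g p (Suc (tt p))" if "p \<in> Rr G" for p
  proof -
    have "g p i \<noteq> g p j"
    proof -
      have "fst p \<in> verts G" using that by (auto simp: Rr_def)
      then have "g p i" using full by (simp add: g_def z_def)
      moreover have "\<not> g p j" using emp by (simp add: g_def)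
      ultimately show ?thesis by simp
    qed
    from ivt[OF this] show ?thesis unfolding tt_def by (rule someI_ex)
  qed
  have into: "Phi ` Rr G \<subseteq> (SIGMA k:{..<n - 1}. F k)"
  proof
    fix q assume "q \<in> Phi ` Rr G"
    then obtain p where p: "p \<in> Rr G" "q = Phi p" by blast
    let ?t = "tt p"
    have "max i j < n" using ij by simp
    then have t: "?t < n - 1" using tt[OF p(1)] by linarith
    have pr: "(z p ?t, z p (Suc ?t)) \<in> Rr G"
    proof (cases "even (?t + i)")
      case True then show ?thesis using p(1) by (simp add: z_def)
    next
      case False then have "(z p ?t, z p (Suc ?t)) = (snd p, fst p)" by (simp add: z_def)
      moreover have "(snd p, fst p) \<in> Rr G" using Rr_sym[OF sg] p(1) by (cases p) simp
      ultimately show ?thesis by simp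
    qed
    have "(z p ?t \<in> al ?t) \<noteq> (z p (Suc ?t) \<in> al (Suc ?t))" using tt[OF p(1)] by (simp add: g_def)
    then have "(z p ?t, z p (Suc ?t)) \<in> F ?t" using pr by (simp add: F_def)
    then show "q \<in> (SIGMA k:{..<n - 1}. F k)" using p t by (simp add: Phi_def)
  qed
  have inj: "inj_on Phi (Rr G)"
  proof
    fix p q assume pq: "p \<in> Rr G" "q \<in> Rr G" "Phi p = Phi q"
    have h: "(tt p, z p (tt p), z p (Suc (tt p))) = (tt q, z q (tt q), z q (Suc (tt q)))"
      using pq(3) by (simp only: Phi_def)
    have e0: "tt p = tt q" "z p (tt p) = z q (tt q)" "z p (Suc (tt p)) = z q (Suc (tt q))"
      using h by (metis prod.inject)+
    have e: "z p (tt p) = z q (tt p)" using e0(1,2) by simp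
    have e': "z p (Suc (tt p)) = z q (Suc (tt p))" using e0(1,3) by simp
    show "p = q"
    proof (cases "even (tt p + i)")
      case True
      then have "fst p = fst q" "snd p = snd q" using e e' by (simp_all add: z_def)
      then show ?thesis by (simp add: prod_eq_iff)
    next
      case False
      then have "snd p = snd q" "fst p = fst q" using e e' by (simp_all add: z_def)
      then show ?thesis by (simp add: prod_eq_iff)
    qed
  qed
  have finS: "finite (SIGMA k:{..<n - 1}. F k)"
    using fin_Rr[OF sg] by (simp add: F_def)
  have "card (Rr G) \<le> card (SIGMA k:{..<n - 1}. F k)"
    using card_inj_on_le[OF inj into finS] .
  also have "\<dots> = (\<Sum>k<n - 1. card (F k))" using fin_Rr[OF sg] by (simp add: F_def)
  also have "\<dots> = (\<Sum>k<n - 1. crs G (al k) (al (Suc k)))" by (simp add: F_def crs_def)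
  also have "\<dots> \<le> tot G n al" by (rule sum_crs_le[OF sub])
  finally show ?thesis .
qed

end

context
  fixes G :: "'a sgraph"
  assumes sg: "sgraph G" and conn: "connected G" and ntr: "nontrivial G"
begin

lemma Gb:
  assumes sub: "\<forall>k<n. al k \<subseteq> verts G \<and> al k \<noteq> {} \<and> al k \<noteq> verts G" and n: "1 \<le> n"
  shows "(3 * n - 2) * edge_connectivity G \<le> tot G n al"
proof -
  let ?l = "edge_connectivity G"
  have a: "n * ?l \<le> (\<Sum>k<n. Mm G al k k)"
  proof -
    have "(\<Sum>k<n. ?l) \<le> (\<Sum>k<n. Mm G al k k)"
      apply (rule sum_mono) using lam_le_ci[OF sg conn ntr] sub by (simp add: Mm_same[OF sg])
    then show ?thesis by simp
  qed
  have b: "(n - 1) * (2 * ?l) \<le> (\<Sum>k<n - 1. crs G (al k) (al (Suc k)))"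
  proof -
    have "(\<Sum>k<n - 1. 2 * ?l) \<le> (\<Sum>k<n - 1. crs G (al k) (al (Suc k)))"
      apply (rule sum_mono) apply (rule crs_2lam[OF sg conn ntr]) using sub by auto
    then show ?thesis by simp
  qed
  have c: "(\<Sum>k<n - 1. crs G (al k) (al (Suc k))) = (\<Sum>k<n - 1. Mm G al k (Suc k) + Mm G al (Suc k) k)"
    apply (rule sum.cong, simp) using Mm_pair[OF sg] sub by simp
  obtain m where m: "n = Suc m" using n by (cases n) auto
  have "(3 * n - 2) * ?l = n * ?l + (n - 1) * (2 * ?l)" unfolding m by (simp add: algebra_simps)
  also have "\<dots> \<le> tot G n al" using a b c T1[where n=n and G=G and al=al] by linarith
  finally show ?thesis .
qed

end


definition QQ :: "'a sgraph \<Rightarrow> 'a set \<Rightarrow> nat" where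
  "QQ H T = (\<Sum>v\<in>T. card (nb H v) + card (nb H v - T))"

lemma Lset_adj: "b = Suc a \<or> a = Suc b \<Longrightarrow> Lset G x a b = nbc G x"
  by (auto simp: Lset_def)

context
  fixes G :: "'a sgraph"
  assumes sg: "sgraph G"
begin

lemma Qedge:
  assumes T: "T \<subseteq> verts G" and xy: "x \<in> T" "y \<in> T" "y \<in> nb G x"
  shows "2 * card (nb G x) + 2 * card (nb G y) \<le> QQ G T + 2"
proof -
  have fT: "finite T" using T fin_V[OF sg] finite_subset by blast
  have xny: "x \<noteq> y" using xy nb_irr[OF sg] by blast
  have xnb: "x \<in> nb G y" using xy(3) nb_sym by metis
  let ?d = "\<lambda>v. card (nb G v)"
  let ?o = "\<lambda>v. card (nb G v - T)"
  have s1: "?o x + ?o y \<le> (\<Sum>v\<in>T. ?o v)"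
  proof -
    have "(\<Sum>v\<in>{x, y}. ?o v) \<le> (\<Sum>v\<in>T. ?o v)" by (rule sum_mono2) (use fT xy in auto)
    then show ?thesis using xny by simp
  qed
  have s2: "(\<Sum>v\<in>T. ?d v) = ?d x + ?d y + (\<Sum>v\<in>T - {x, y}. ?d v)"
  proof -
    have "T = {x, y} \<union> (T - {x, y})" using xy by blast
    then have "(\<Sum>v\<in>T. ?d v) = (\<Sum>v\<in>{x, y}. ?d v) + (\<Sum>v\<in>T - {x, y}. ?d v)"
      using fT by (metis (no_types, lifting) Diff_disjoint finite_Diff finite.emptyI finite.insertI sum.union_disjoint)
    then show ?thesis using xny by simp
  qed
  have s3: "card {v \<in> T - {x, y}. x \<in> nb G v} + card {v \<in> T - {x, y}. y \<in> nb G v} \<le> (\<Sum>v\<in>T - {x, y}. ?d v)"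
  proof -
    have "(\<Sum>v\<in>T - {x, y}. (of_bool (x \<in> nb G v) + of_bool (y \<in> nb G v) :: nat)) \<le> (\<Sum>v\<in>T - {x, y}. ?d v)"
    proof (rule sum_mono)
      fix v assume "v \<in> T - {x, y}"
      have "card (nb G v \<inter> {x, y}) \<le> ?d v" by (rule card_mono[OF fin_nb[OF sg]]) blast
      moreover have "card (nb G v \<inter> {x, y}) = of_bool (x \<in> nb G v) + of_bool (y \<in> nb G v)"
        using xny by (cases "x \<in> nb G v"; cases "y \<in> nb G v") (auto simp: Int_insert_right)
      ultimately show "(of_bool (x \<in> nb G v) + of_bool (y \<in> nb G v) :: nat) \<le> ?d v" by simp
    qed
    moreover have "(\<Sum>v\<in>T - {x, y}. (of_bool (x \<in> nb G v) + of_bool (y \<in> nb G v) :: nat))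
        = card {v \<in> T - {x, y}. x \<in> nb G v} + card {v \<in> T - {x, y}. y \<in> nb G v}"
      using fT by (simp add: sum.distrib Int_def)
    ultimately show ?thesis by simp
  qed
  have s4: "{v \<in> T - {x, y}. x \<in> nb G v} = (nb G x \<inter> T) - {y}"
    using nb_irr[OF sg] nb_sym by fastforce
  have s4': "{v \<in> T - {x, y}. y \<in> nb G v} = (nb G y \<inter> T) - {x}"
    using nb_irr[OF sg] nb_sym by fastforce
  have c4: "card ((nb G x \<inter> T) - {y}) + 1 = card (nb G x \<inter> T)"
    using xy fT by (metis IntI card_Diff1_le card.remove finite_Int add.commute plus_1_eq_Suc)
  have c4': "card ((nb G y \<inter> T) - {x}) + 1 = card (nb G y \<inter> T)"
    using xy xnb fT by (metis IntI card.remove finite_Int add.commute plus_1_eq_Suc)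
  have c5: "?o x + card (nb G x \<inter> T) = ?d x"
    using fin_nb[OF sg] by (metis Diff_Diff_Int Int_commute card_Diff_subset_Int card_Int_Diff inf_le1 finite_Int add.commute)
  have c5': "?o y + card (nb G y \<inter> T) = ?d y"
    using fin_nb[OF sg] by (metis Diff_Diff_Int Int_commute card_Diff_subset_Int card_Int_Diff inf_le1 finite_Int add.commute)
  have "QQ G T = (\<Sum>v\<in>T. ?d v) + (\<Sum>v\<in>T. ?o v)" unfolding QQ_def by (rule sum.distrib)
  moreover have s3': "card ((nb G x \<inter> T) - {y}) + card ((nb G y \<inter> T) - {x}) \<le> (\<Sum>v\<in>T - {x, y}. ?d v)"
    using s3 unfolding s4 s4' .
  ultimately have q: "QQ G T = (\<Sum>v\<in>T. ?d v) + (\<Sum>v\<in>T. ?o v)"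
    "card ((nb G x \<inter> T) - {y}) + card ((nb G y \<inter> T) - {x}) \<le> (\<Sum>v\<in>T - {x, y}. ?d v)" by blast+
  define A1 where "A1 = card ((nb G x \<inter> T) - {y})"
  define A2 where "A2 = card ((nb G y \<inter> T) - {x})"
  define SR where "SR = (\<Sum>v\<in>T - {x, y}. ?d v)"
  define SD where "SD = (\<Sum>v\<in>T. ?d v)"
  define SO where "SO = (\<Sum>v\<in>T. ?o v)"
  have "QQ G T = SD + SO" "A1 + A2 \<le> SR" "?o x + ?o y \<le> SO" "SD = ?d x + ?d y + SR"
    "A1 + 1 = card (nb G x \<inter> T)" "A2 + 1 = card (nb G y \<inter> T)"
    using q s1 s2 c4 c4' by (simp_all add: A1_def A2_def SR_def SD_def SO_def)
  then show ?thesis using c5 c5' by presburger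
qed

lemma Qge: "(\<Sum>v\<in>T. card (nb G v)) \<le> QQ G T"
  unfolding QQ_def by (rule sum_mono) simp

lemma Qind:
  assumes "\<forall>u\<in>T. \<forall>w\<in>T. w \<notin> nb G u"
  shows "QQ G T = 2 * (\<Sum>v\<in>T. card (nb G v))"
proof -
  have "QQ G T = (\<Sum>v\<in>T. 2 * card (nb G v))"
    unfolding QQ_def apply (rule sum.cong, simp)
    using assms by (metis Diff_triv disjoint_iff mult_2)
  then show ?thesis by (simp add: sum_distrib_left)
qed

end


lemma minL: "(a::nat) < t \<Longrightarrow> min a b < t" by simp
lemma minR: "(b::nat) < t \<Longrightarrow> min a b < t" by simp

lemma sum_Suc_card: "(\<Sum>x\<in>A. Suc (f x)) = sum f A + card A"
  by (induct A rule: infinite_finite_induct) auto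

lemma sum_only:
  fixes n :: nat
  assumes "S \<subseteq> {..<n}" "\<forall>k<n. k \<notin> S \<longrightarrow> al k = {}"
  shows "(\<Sum>k<n. card (al k)) = (\<Sum>k\<in>S. card (al k))"
  apply (rule sum.mono_neutral_right) using assms by auto

context
  fixes G :: "'a sgraph"
  assumes sg: "sgraph G" and conn: "connected G" and ntr: "nontrivial G"
begin

lemma ci_ge1: "U \<subseteq> verts G \<Longrightarrow> U \<noteq> {} \<Longrightarrow> U \<noteq> verts G \<Longrightarrow> 1 \<le> ci G U"
  using lam_ge1[OF sg conn ntr] lam_le_ci[OF sg conn ntr] by (meson le_trans)

lemma sum_d_ge: "T \<subseteq> verts G \<Longrightarrow> card T * min_degree G \<le> (\<Sum>v\<in>T. card (nb G v))"
proof -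
  assume T: "T \<subseteq> verts G"
  have "(\<Sum>v\<in>T. min_degree G) \<le> (\<Sum>v\<in>T. card (nb G v))"
    by (rule sum_mono) (use T dl_le[OF sg conn ntr] in blast)
  then show ?thesis by simp
qed

lemma Gc:
  assumes sub: "\<forall>k<n. al k \<subseteq> verts G \<and> al k \<noteq> verts G"
    and an: "a < n" and bn: "b < n" and adj: "b = Suc a \<or> a = Suc b" and eb: "al b = {}" and ea: "al a \<noteq> {}"
    and three: "3 \<le> (\<Sum>k<n. card (al k))"
    and cx: "(\<exists>k<n. k \<noteq> a \<and> al k \<noteq> {}) \<Longrightarrow> (\<exists>c<n. (c = Suc a \<or> a = Suc c) \<and> c \<noteq> b \<and> al c \<noteq> {})"
  shows "min (2 * min_edge_degree G + 4) (5 * min_degree G + 1) < tot G n al"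
proof -
  let ?xi = "min_edge_degree G"
  let ?dl = "min_degree G"
  let ?M = "\<lambda>k l. Mm G al k l"
  define T where "T = al a"
  have TV: "T \<subseteq> verts G" using sub an by (simp add: T_def)
  have fT: "finite T" using TV fin_V[OF sg] finite_subset by blast
  have dl1: "1 \<le> ?dl" by (rule dl_ge1[OF sg conn ntr])
  have ab: "a \<noteq> b" using adj by auto
  have nbc_c: "card (nbc G v) = Suc (card (nb G v))" for v using card_nbc[OF sg] .
  have base: "?M a a + ?M a b = QQ G T + card T"
  proof -
    have "?M a b = (\<Sum>x\<in>T. Suc (card (nb G x)))"
      unfolding Mm_def T_def[symmetric] eb Lset_adj[OF adj] by (simp add: nbc_c)
    moreover have "?M a a = (\<Sum>x\<in>T. card (nb G x - T))" by (simp add: Mm_def Lset_same[OF sg] T_def)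
    ultimately show ?thesis by (simp add: QQ_def sum.distrib sum_Suc_card)
  qed
  have ex_k: "\<exists>k<n. k \<noteq> a \<and> al k \<noteq> {}" if "card T \<le> 2"
  proof (rule ccontr)
    assume "\<not> ?thesis"
    then have "(\<Sum>k<n. card (al k)) = (\<Sum>k\<in>{a}. card (al k))" by (intro sum_only) (use an in auto)
    then show False using three that by (simp add: T_def)
  qed
  have kk: "1 \<le> ?M k k" if "k < n" "al k \<noteq> {}" for k
    unfolding Mm_same[OF sg] by (rule ci_ge1) (use sub that in auto)
  show ?thesis
  proof (cases "3 \<le> card T")
    case T3: True
    have le: "QQ G T + card T \<le> tot G n al"
    proof -
      have "(\<Sum>p\<in>{(a, a), (a, b)}. ?M (fst p) (snd p)) \<le> tot G n al" by (rule T2) (use an bn in auto)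
      then show ?thesis using base ab by simp
    qed
    show ?thesis
    proof (cases "\<exists>x\<in>T. \<exists>y\<in>T. y \<in> nb G x")
      case True
      then obtain x y where xy: "x \<in> T" "y \<in> T" "y \<in> nb G x" by blast
      have "?xi + 2 \<le> card (nb G x) + card (nb G y)" using xi_le[OF sg conn ntr] xy(3) by (simp add: nb_def)
      moreover have "2 * card (nb G x) + 2 * card (nb G y) \<le> QQ G T + 2" by (rule Qedge[OF sg TV xy])
      ultimately show ?thesis using le T3 by - (rule minL, linarith)
    next
      case False
      then have "QQ G T = 2 * (\<Sum>v\<in>T. card (nb G v))" using Qind[OF sg] by blast
      moreover have "card T * ?dl \<le> (\<Sum>v\<in>T. card (nb G v))" by (rule sum_d_ge[OF TV])
      moreover have "3 * ?dl \<le> card T * ?dl" using T3 by simp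
      ultimately show ?thesis using le T3 dl1 by - (rule minR, linarith)
    qed
  next
    case False
    then have T2': "card T \<le> 2" by simp
    obtain k where k: "k < n" "k \<noteq> a" "al k \<noteq> {}" using ex_k[OF T2'] by blast
    have kb: "k \<noteq> b" using k eb by auto
    obtain c where c: "c < n" "c = Suc a \<or> a = Suc c" "c \<noteq> b" "al c \<noteq> {}" using cx k by blast
    have ca: "c \<noteq> a" using c(2) by auto
    have ca_adj: "a = Suc c \<or> c = Suc a" using c(2) by auto
    define R where "R = al c"
    have RV: "R \<subseteq> verts G" using sub c by (simp add: R_def)
    have fR: "finite R" using RV fin_V[OF sg] finite_subset by blast
    have Mca: "?M c a = (\<Sum>w\<in>R. card (nbc G w - T))"
      unfolding Mm_def R_def[symmetric] T_def[symmetric] Lset_adj[OF ca_adj] ..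
    have Mac: "?M a c = (\<Sum>w\<in>T. card (nbc G w - R))"
      unfolding Mm_def R_def[symmetric] T_def[symmetric] Lset_adj[OF c(2)] ..
    have Mcc: "?M c c = ci G R" unfolding Mm_same[OF sg] R_def ..
    have Rne: "R \<noteq> {}" using c by (simp add: R_def)
    show ?thesis
    proof (cases "card T = 2")
      case True
      then obtain x y where xy: "T = {x, y}" "x \<noteq> y" by (meson card_2_iff)
      show ?thesis
      proof (cases "y \<in> nb G x")
        case True
        have le: "QQ G T + 2 + 1 \<le> tot G n al"
        proof -
          have "(\<Sum>p\<in>{(a, a), (a, b), (k, k)}. ?M (fst p) (snd p)) \<le> tot G n al" by (rule T2) (use an bn k in auto)
          then show ?thesis using base ab k kb kk[OF k(1) k(3)] \<open>card T = 2\<close> by simp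
        qed
        have "?xi + 2 \<le> card (nb G x) + card (nb G y)" using xi_le[OF sg conn ntr] True by (simp add: nb_def)
        moreover have "2 * card (nb G x) + 2 * card (nb G y) \<le> QQ G T + 2" by (rule Qedge[OF sg TV]) (use xy True in auto)
        ultimately show ?thesis using le by - (rule minL, linarith)
      next
        case False
        have ind: "\<forall>u\<in>T. \<forall>w\<in>T. w \<notin> nb G u"
          using xy False nb_irr[OF sg] nb_sym by (metis insert_iff singletonD)
        have Q4: "4 * ?dl \<le> QQ G T"
        proof -
          have "QQ G T = 2 * (\<Sum>v\<in>T. card (nb G v))" using Qind[OF sg ind] .
          moreover have "card T * ?dl \<le> (\<Sum>v\<in>T. card (nb G v))" by (rule sum_d_ge[OF TV])
          ultimately show ?thesis using \<open>card T = 2\<close> by simp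
        qed
        obtain z where z: "z \<in> R" using Rne by blast
        have zV: "z \<in> verts G" using z RV by blast
        have "card (nbc G z) - card T \<le> card (nbc G z - T)" by (rule diff_card_le_card_Diff[OF fT])
        moreover have "card (nbc G z - T) \<le> ?M c a"
          unfolding Mca by (rule member_le_sum) (use z fR in auto)
        moreover have "?dl \<le> card (nb G z)" by (rule dl_le[OF sg conn ntr zV])
        ultimately have mca: "?dl + 1 \<le> ?M c a + 2" using \<open>card T = 2\<close> nbc_c[of z] by linarith
        have mcc: "1 \<le> ?M c c" using kk[OF c(1) c(4)] .
        have le: "?M a a + ?M a b + ?M c c + ?M c a \<le> tot G n al"
        proof -
          have "(\<Sum>p\<in>{(a, a), (a, b), (c, c), (c, a)}. ?M (fst p) (snd p)) \<le> tot G n al" by (rule T2) (use an bn c in auto)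
          then show ?thesis using ab ca c(3) by simp
        qed
        show ?thesis using le base mca mcc Q4 \<open>card T = 2\<close> by - (rule minR, linarith)
      qed
    next
      case False
      then have "card T = 1" using T2' ea fT by (simp add: T_def[symmetric]) (metis One_nat_def card_0_eq le_SucE le_zero_eq numeral_2_eq_2)
      then obtain x where x: "T = {x}" by (meson card_1_singletonE)
      have QT: "QQ G T = 2 * card (nb G x)" using nb_irr[OF sg] by (simp add: QQ_def x)
      have dx: "?dl \<le> card (nb G x)" using dl_le[OF sg conn ntr] TV x by blast
      have MRa: "(\<Sum>w\<in>R. card (nb G w)) \<le> ?M c a"
        unfolding Mca
      proof (rule sum_mono)
        fix w assume "w \<in> R"
        have "card (nbc G w) - card T \<le> card (nbc G w - T)" by (rule diff_card_le_card_Diff[OF fT])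
        then show "card (nb G w) \<le> card (nbc G w - T)" using nbc_c[of w] x by simp
      qed
      have QR: "QQ G R \<le> ?M c a + ?M c c"
        using MRa unfolding Mcc QQ_def ci_def by (simp add: sum.distrib)
      have le: "?M a a + ?M a b + ?M c c + ?M c a \<le> tot G n al"
      proof -
        have "(\<Sum>p\<in>{(a, a), (a, b), (c, c), (c, a)}. ?M (fst p) (snd p)) \<le> tot G n al" by (rule T2) (use an bn c in auto)
        then show ?thesis using ab ca c(3) by simp
      qed
      show ?thesis
      proof (cases "2 \<le> card R")
        case R2: True
        show ?thesis
        proof (cases "\<exists>u\<in>R. \<exists>w\<in>R. w \<in> nb G u")
          case True
          then obtain u w where uw: "u \<in> R" "w \<in> R" "w \<in> nb G u" by blast
          have "?xi + 2 \<le> card (nb G u) + card (nb G w)" using xi_le[OF sg conn ntr] uw(3) by (simp add: nb_def)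
          moreover have "2 * card (nb G u) + 2 * card (nb G w) \<le> QQ G R + 2" by (rule Qedge[OF sg RV uw])
          ultimately show ?thesis using le base QR QT dx dl1 \<open>card T = 1\<close> by - (rule minL, linarith)
        next
          case False
          then have "QQ G R = 2 * (\<Sum>v\<in>R. card (nb G v))" using Qind[OF sg] by blast
          moreover have "card R * ?dl \<le> (\<Sum>v\<in>R. card (nb G v))" by (rule sum_d_ge[OF RV])
          moreover have "2 * ?dl \<le> card R * ?dl" using R2 by simp
          ultimately show ?thesis using le base QR QT dx dl1 \<open>card T = 1\<close> by - (rule minR, linarith)
        qed
      next
        case False
        then have "card R = 1" using Rne fR by (metis One_nat_def card_0_eq le_SucE le_zero_eq not_less_eq_eq numeral_2_eq_2)
        then obtain z where z: "R = {z}" by (meson card_1_singletonE)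
        have ex_k2: "\<exists>k<n. k \<noteq> a \<and> k \<noteq> c \<and> al k \<noteq> {}"
        proof (rule ccontr)
          assume "\<not> ?thesis"
          then have "(\<Sum>k<n. card (al k)) = (\<Sum>k\<in>{a, c}. card (al k))" by (intro sum_only) (use an c in auto)
          then show False using three \<open>card T = 1\<close> \<open>card R = 1\<close> ca by (simp add: T_def R_def)
        qed
        then obtain k2 where k2: "k2 < n" "k2 \<noteq> a" "k2 \<noteq> c" "al k2 \<noteq> {}" by blast
        have k2b: "k2 \<noteq> b" using k2 eb by auto
        have zV: "z \<in> verts G" using z RV by blast
        have dz: "?dl \<le> card (nb G z)" by (rule dl_le[OF sg conn ntr zV])
        have mac: "card (nb G x) \<le> ?M a c"
        proof -
          have "card (nbc G x) - card R \<le> card (nbc G x - R)" by (rule diff_card_le_card_Diff[OF fR])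
          then show ?thesis unfolding Mac using x \<open>card R = 1\<close> nbc_c[of x] by simp
        qed
        have mcc: "?M c c = card (nb G z)" unfolding Mcc ci_def using z nb_irr[OF sg] by simp
        have mca: "card (nb G z) \<le> ?M c a" using MRa z by simp
        have le2: "?M a a + ?M a b + ?M a c + ?M c a + ?M c c + ?M k2 k2 \<le> tot G n al"
        proof -
          have "(\<Sum>p\<in>{(a, a), (a, b), (a, c), (c, a), (c, c), (k2, k2)}. ?M (fst p) (snd p)) \<le> tot G n al"
            by (rule T2) (use an bn c k2 in auto)
          then show ?thesis using ab ca c(3) k2 k2b by simp
        qed
        show ?thesis using le2 base QT mac mcc mca kk[OF k2(1) k2(4)] dx dz \<open>card T = 1\<close> by - (rule minR, linarith)
      qed
    qed
  qed
qed

end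


lemma path_edge: "{i, j} \<in> edges (path_graph n) \<longleftrightarrow> (j = Suc i \<and> Suc i < n) \<or> (i = Suc j \<and> Suc j < n)"
proof
  assume "{i, j} \<in> edges (path_graph n)"
  then obtain m where m: "{i, j} = {m, Suc m}" "Suc m < n" by (auto simp: path_graph_def edges_def)
  then have "(i = m \<and> j = Suc m) \<or> (i = Suc m \<and> j = m)" by (simp add: doubleton_eq_iff)
  then show "(j = Suc i \<and> Suc i < n) \<or> (i = Suc j \<and> Suc j < n)" using m(2) by auto
next
  assume "(j = Suc i \<and> Suc i < n) \<or> (i = Suc j \<and> Suc j < n)"
  then show "{i, j} \<in> edges (path_graph n)"
  proof
    assume "j = Suc i \<and> Suc i < n" then show ?thesis by (auto simp: path_graph_def edges_def)
  next
    assume h: "i = Suc j \<and> Suc j < n"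
    then have "{i, j} = {j, Suc j}" by auto
    then show ?thesis using h by (auto simp: path_graph_def edges_def)
  qed
qed

lemma path_verts: "verts (path_graph n) = {0..<n}" by (simp add: path_graph_def verts_def)

definition pcond :: "'a sgraph \<Rightarrow> nat \<Rightarrow> 'a \<times> nat \<Rightarrow> 'a \<times> nat \<Rightarrow> bool" where
  "pcond G n p q \<longleftrightarrow> fst p \<in> verts G \<and> fst q \<in> verts G \<and> snd p < n \<and> snd q < n \<and>
     ((fst p = fst q \<and> {snd p, snd q} \<in> edges (path_graph n)) \<or>
      (snd p = snd q \<and> {fst p, fst q} \<in> edges G) \<or>
      ({fst p, fst q} \<in> edges G \<and> {snd p, snd q} \<in> edges (path_graph n)))"

lemma pcond_sym: "pcond G n p q \<longleftrightarrow> pcond G n q p"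
  unfolding pcond_def by (auto simp: insert_commute)

lemma sp_edges: "edges (strong_product G (path_graph n)) = {{p, q} | p q. pcond G n p q}"
proof -
  have "edges (strong_product G (path_graph n)) = {{(x1, y1), (x2, y2)} | x1 y1 x2 y2.
        x1 \<in> verts G \<and> x2 \<in> verts G \<and> y1 \<in> verts (path_graph n) \<and> y2 \<in> verts (path_graph n) \<and>
        ((x1 = x2 \<and> {y1, y2} \<in> edges (path_graph n)) \<or>
         (y1 = y2 \<and> {x1, x2} \<in> edges G) \<or>
         ({x1, x2} \<in> edges G \<and> {y1, y2} \<in> edges (path_graph n)))}"
    by (simp add: strong_product_def edges_def)
  also have "\<dots> = {{p, q} | p q. pcond G n p q}"
  proof (rule set_eqI, rule iffI)
    fix e assume "e \<in> {{(x1, y1), (x2, y2)} | x1 y1 x2 y2.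
        x1 \<in> verts G \<and> x2 \<in> verts G \<and> y1 \<in> verts (path_graph n) \<and> y2 \<in> verts (path_graph n) \<and>
        ((x1 = x2 \<and> {y1, y2} \<in> edges (path_graph n)) \<or>
         (y1 = y2 \<and> {x1, x2} \<in> edges G) \<or>
         ({x1, x2} \<in> edges G \<and> {y1, y2} \<in> edges (path_graph n)))}"
    then obtain x1 y1 x2 y2 where h: "e = {(x1, y1), (x2, y2)}" "x1 \<in> verts G \<and> x2 \<in> verts G \<and> y1 \<in> verts (path_graph n) \<and> y2 \<in> verts (path_graph n) \<and>
        ((x1 = x2 \<and> {y1, y2} \<in> edges (path_graph n)) \<or>
         (y1 = y2 \<and> {x1, x2} \<in> edges G) \<or>
         ({x1, x2} \<in> edges G \<and> {y1, y2} \<in> edges (path_graph n)))" by blast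
    then have "pcond G n (x1, y1) (x2, y2)" unfolding pcond_def path_verts by simp
    then show "e \<in> {{p, q} | p q. pcond G n p q}" using h(1) by blast
  next
    fix e assume "e \<in> {{p, q} | p q. pcond G n p q}"
    then obtain p q where h: "e = {p, q}" "pcond G n p q" by blast
    obtain x1 y1 where p: "p = (x1, y1)" by (cases p)
    obtain x2 y2 where q: "q = (x2, y2)" by (cases q)
    have "x1 \<in> verts G \<and> x2 \<in> verts G \<and> y1 \<in> verts (path_graph n) \<and> y2 \<in> verts (path_graph n) \<and>
        ((x1 = x2 \<and> {y1, y2} \<in> edges (path_graph n)) \<or>
         (y1 = y2 \<and> {x1, x2} \<in> edges G) \<or>
         ({x1, x2} \<in> edges G \<and> {y1, y2} \<in> edges (path_graph n)))"
      using h(2) unfolding p q pcond_def path_verts by simp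
    then show "e \<in> {{(x1, y1), (x2, y2)} | x1 y1 x2 y2.
        x1 \<in> verts G \<and> x2 \<in> verts G \<and> y1 \<in> verts (path_graph n) \<and> y2 \<in> verts (path_graph n) \<and>
        ((x1 = x2 \<and> {y1, y2} \<in> edges (path_graph n)) \<or>
         (y1 = y2 \<and> {x1, x2} \<in> edges G) \<or>
         ({x1, x2} \<in> edges G \<and> {y1, y2} \<in> edges (path_graph n)))}"
      using h(1) p q by blast
  qed
  finally show ?thesis .
qed

lemma sp_verts: "verts (strong_product G (path_graph n)) = verts G \<times> {..<n}"
  by (auto simp: strong_product_def verts_def path_graph_def)

lemma sp_edge_iff: "{p, q} \<in> edges (strong_product G (path_graph n)) \<longleftrightarrow> pcond G n p q"
proof
  assume "{p, q} \<in> edges (strong_product G (path_graph n))"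
  then obtain p' q' where "{p, q} = {p', q'}" "pcond G n p' q'" unfolding sp_edges by blast
  then show "pcond G n p q" using pcond_sym by (metis doubleton_eq_iff)
next
  assume "pcond G n p q"
  then show "{p, q} \<in> edges (strong_product G (path_graph n))" unfolding sp_edges by blast
qed

context
  fixes G :: "'a sgraph"
  assumes sg: "sgraph G"
begin

lemma sp_adj:
  "{(x, k), (y, l)} \<in> edges (strong_product G (path_graph n)) \<longleftrightarrow>
    x \<in> verts G \<and> y \<in> verts G \<and> k < n \<and> l < n \<and> (x, k) \<noteq> (y, l) \<and>
    (x = y \<or> {x, y} \<in> edges G) \<and> (l = k \<or> l = Suc k \<or> k = Suc l)"
proof -
  have ne: "{x, y} \<in> edges G \<Longrightarrow> x \<noteq> y" using sgraph_edgeD(1)[OF sg] by blast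
  show ?thesis unfolding sp_edge_iff pcond_def path_edge using ne by auto
qed

lemma sg_X: "sgraph (strong_product G (path_graph n))"
  unfolding sgraph_def
proof (intro conjI ballI)
  show "finite (verts (strong_product G (path_graph n)))" unfolding sp_verts using fin_V[OF sg] by simp
next
  fix e assume "e \<in> edges (strong_product G (path_graph n))"
  then obtain p q where e: "e = {p, q}" "pcond G n p q" unfolding sp_edges by blast
  obtain x k where p: "p = (x, k)" by (cases p)
  obtain y l where q: "q = (y, l)" by (cases q)
  have "{(x, k), (y, l)} \<in> edges (strong_product G (path_graph n))" using e p q sp_edge_iff by metis
  then have "x \<in> verts G \<and> y \<in> verts G \<and> k < n \<and> l < n \<and> (x, k) \<noteq> (y, l)" unfolding sp_adj by blast
  then show "\<exists>u v. e = {u, v} \<and> u \<noteq> v \<and> u \<in> verts (strong_product G (path_graph n)) \<and> v \<in> verts (strong_product G (path_graph n))"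
    using e p q by (auto simp: sp_verts)
qed

lemma nbX:
  assumes "x \<in> verts G" "k < n"
  shows "nb (strong_product G (path_graph n)) (x, k) = {(y, l). l < n \<and> y \<in> Lset G x k l}"
proof -
  have "(y, l) \<in> nb (strong_product G (path_graph n)) (x, k) \<longleftrightarrow> l < n \<and> y \<in> Lset G x k l" for y l
  proof -
    have e1: "{x, y} \<in> edges G \<Longrightarrow> y \<in> verts G \<and> x \<noteq> y" using sgraph_edgeD[OF sg] by blast
    show ?thesis unfolding nb_def mem_Collect_eq sp_adj Lset_def nbc_def nb_def
      using assms e1 by auto
  qed
  then show ?thesis by auto
qed

end


definition lay :: "('a \<times> nat) set \<Rightarrow> nat \<Rightarrow> 'a set" where
  "lay C k = {x. (x, k) \<in> C}"

context
  fixes G :: "'a sgraph"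
  assumes sg: "sgraph G"
begin

lemma nbX_diff_card:
  assumes "x \<in> verts G" "k < n"
  shows "card (nb (strong_product G (path_graph n)) (x, k) - C) = (\<Sum>l<n. card (Lset G x k l - lay C l))"
proof -
  have "nb (strong_product G (path_graph n)) (x, k) - C = (\<lambda>(l, y). (y, l)) ` (SIGMA l:{..<n}. Lset G x k l - lay C l)"
    unfolding nbX[OF sg assms] by (auto simp: lay_def image_iff)
  moreover have "inj_on (\<lambda>(l, y). (y, l)) (SIGMA l:{..<n}. Lset G x k l - lay C l)" by (auto simp: inj_on_def)
  ultimately have "card (nb (strong_product G (path_graph n)) (x, k) - C) = card (SIGMA l:{..<n}. Lset G x k l - lay C l)"
    by (simp add: card_image)
  also have "\<dots> = (\<Sum>l<n. card (Lset G x k l - lay C l))" using fin_Lset[OF sg] by simp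
  finally show ?thesis .
qed

lemma C_eq:
  assumes "C \<subseteq> verts G \<times> {..<n}"
  shows "C = (\<lambda>(k, x). (x, k)) ` (SIGMA k:{..<n}. lay C k)"
  using assms by (auto simp: lay_def image_iff)

lemma sum_C:
  assumes "C \<subseteq> verts G \<times> {..<n}"
  shows "(\<Sum>v\<in>C. f v) = (\<Sum>k<n. \<Sum>x\<in>lay C k. f (x, k))"
proof -
  have inj: "inj_on (\<lambda>(k, x). (x, k)) (SIGMA k:{..<n}. lay C k)" by (auto simp: inj_on_def)
  have fl: "finite (lay C k)" for k
  proof -
    have "lay C k \<subseteq> verts G" using assms by (auto simp: lay_def)
    then show ?thesis using fin_V[OF sg] finite_subset by blast
  qed
  have "(\<Sum>v\<in>C. f v) = (\<Sum>p\<in>(SIGMA k:{..<n}. lay C k). f ((\<lambda>(k, x). (x, k)) p))"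
    apply (subst C_eq[OF assms]) apply (subst sum.reindex[OF inj]) by (simp add: comp_def)
  also have "\<dots> = (\<Sum>(k, x)\<in>(SIGMA k:{..<n}. lay C k). f (x, k))"
    by (rule sum.cong) auto
  also have "\<dots> = (\<Sum>k<n. \<Sum>x\<in>lay C k. f (x, k))"
    by (rule sum.Sigma[symmetric]) (use fl in auto)
  finally show ?thesis .
qed

lemma lay_sub: "C \<subseteq> verts G \<times> {..<n} \<Longrightarrow> lay C k \<subseteq> verts G"
  by (auto simp: lay_def)

lemma card_C: "C \<subseteq> verts G \<times> {..<n} \<Longrightarrow> card C = (\<Sum>k<n. card (lay C k))"
  using sum_C[of C n "\<lambda>_. (1::nat)"] by auto

lemma cut_tot:
  assumes C: "C \<subseteq> verts G \<times> {..<n}"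
  shows "(\<Sum>v\<in>C. card (nb (strong_product G (path_graph n)) v - C)) = tot G n (lay C)"
proof -
  have "(\<Sum>v\<in>C. card (nb (strong_product G (path_graph n)) v - C)) =
      (\<Sum>k<n. \<Sum>x\<in>lay C k. card (nb (strong_product G (path_graph n)) (x, k) - C))"
    by (rule sum_C[OF C])
  also have "\<dots> = (\<Sum>k<n. \<Sum>x\<in>lay C k. \<Sum>l<n. card (Lset G x k l - lay C l))"
    apply (rule sum.cong, simp) apply (rule sum.cong, simp)
    apply (rule nbX_diff_card) using lay_sub[OF C] by auto
  also have "\<dots> = (\<Sum>k<n. \<Sum>l<n. Mm G (lay C) k l)"
    unfolding Mm_def by (rule sum.cong, simp) (rule sum.swap)
  also have "\<dots> = (\<Sum>(k, l)\<in>{..<n} \<times> {..<n}. Mm G (lay C) k l)"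
    by (rule sum.cartesian_product)
  also have "\<dots> = tot G n (lay C)"
    unfolding tot_def by (simp add: case_prod_beta)
  finally show ?thesis .
qed

lemma degX:
  assumes "x \<in> verts G" "k < n"
  shows "card (nb (strong_product G (path_graph n)) (x, k)) = (\<Sum>l<n. card (Lset G x k l))"
  using nbX_diff_card[OF assms, of "{}"] by (simp add: lay_def)

lemma deg0:
  assumes "x \<in> verts G" "2 \<le> n"
  shows "card (nb (strong_product G (path_graph n)) (x, 0)) = 2 * card (nb G x) + 1"
proof -
  have "(\<Sum>l<n. card (Lset G x 0 l)) = (\<Sum>l\<in>{0, 1}. card (Lset G x 0 l))"
    apply (rule sum.mono_neutral_right) using assms by (auto simp: Lset_def split: if_splits)
  also have "\<dots> = 2 * card (nb G x) + 1" by (simp add: Lset_def card_nbc[OF sg])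
  finally show ?thesis using degX assms by simp
qed

lemma deg1:
  assumes "x \<in> verts G" "3 \<le> n"
  shows "card (nb (strong_product G (path_graph n)) (x, 1)) = 3 * card (nb G x) + 2"
proof -
  have "(\<Sum>l<n. card (Lset G x 1 l)) = (\<Sum>l\<in>{0, 1, 2}. card (Lset G x 1 l))"
    apply (rule sum.mono_neutral_right) using assms by (auto simp: Lset_def split: if_splits)
  also have "\<dots> = 3 * card (nb G x) + 2" by (simp add: Lset_def card_nbc[OF sg])
  finally show ?thesis using degX assms by simp
qed

end


lemma comp_sub: "component H v \<subseteq> verts H" by (auto simp: component_def)

lemma bd_comp_sub:
  assumes sgH: "sgraph H"
  shows "bdH H (component (del_edges H S) v) \<subseteq> S"
proof
  fix e assume e: "e \<in> bdH H (component (del_edges H S) v)"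
  then obtain p q where pq: "e \<in> edges H" "e = {p, q}" "p \<in> component (del_edges H S) v" "q \<notin> component (del_edges H S) v"
    unfolding bdH_def by blast
  show "e \<in> S"
  proof (rule ccontr)
    assume "e \<notin> S"
    then have "adj (del_edges H S) p q" using pq by (simp add: adj_del)
    moreover have "reachable (del_edges H S) v p" using pq(3) by (simp add: component_def)
    ultimately have "reachable (del_edges H S) v q" unfolding reachable_def by simp
    moreover have "q \<in> verts H" using sgraph_edgeD(3)[OF sgH] pq(1,2) by blast
    ultimately show False using pq(4) by (simp add: component_def)
  qed
qed

lemma comp_disj:
  assumes "w \<in> verts H" "w \<notin> component H u"
  shows "component H u \<inter> component H w = {}"
proof (rule ccontr)
  assume "component H u \<inter> component H w \<noteq> {}"
  then obtain z where "reachable H u z" "reachable H w z" by (auto simp: component_def)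
  then have "reachable H u w" using reach_sym reach_trans by metis
  then show False using assms by (simp add: component_def)
qed

lemma comp_self: "v \<in> verts H \<Longrightarrow> v \<in> component H v"
  by (simp add: component_def reachable_def)

lemma fin_comp: "sgraph H \<Longrightarrow> finite (component (del_edges H S) v)"
  using comp_sub[of "del_edges H S" v] fin_verts[of H] finite_subset by fastforce

lemma restricted_pair:
  assumes sgH: "sgraph H" and uv: "{u, v} \<in> edges H"
    and w: "w \<in> verts H" "w \<noteq> u" "w \<noteq> v"
    and nbr: "\<And>z. z \<in> verts H \<Longrightarrow> z \<noteq> u \<Longrightarrow> z \<noteq> v \<Longrightarrow> \<exists>z'. {z, z'} \<in> edges H \<and> z' \<noteq> u \<and> z' \<noteq> v"
  shows "restricted_edge_cut H (bdH H {u, v})"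
    and "card (bdH H {u, v}) + 2 = card (nb H u) + card (nb H v)"
proof -
  have uV: "u \<in> verts H" "v \<in> verts H" "u \<noteq> v" using sgraph_edgeD[OF sgH uv] by auto
  let ?S = "bdH H {u, v}"
  have cut: "edge_cut H ?S"
    unfolding edge_cut_def using bdH_sub bdH_disconn[of u "{u, v}" H w] uV w by blast
  have two: "2 \<le> card (component (del_edges H ?S) z)" if z: "z \<in> verts H" for z
  proof -
    obtain z' where z': "{z, z'} \<in> edges H" "{z, z'} \<notin> ?S"
    proof (cases "z = u \<or> z = v")
      case True
      show ?thesis
      proof (rule that)
        show "{z, if z = u then v else u} \<in> edges H" using True uv by (auto simp: insert_commute)
        show "{z, if z = u then v else u} \<notin> ?S" using True uV by (auto simp: bdH_def doubleton_eq_iff)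
      qed
    next
      case False
      then obtain z' where "{z, z'} \<in> edges H" "z' \<noteq> u" "z' \<noteq> v" using nbr z by blast
      then show ?thesis using False that by (auto simp: bdH_def doubleton_eq_iff)
    qed
    have zz: "z \<noteq> z'" "z' \<in> verts H" using sgraph_edgeD[OF sgH z'(1)] by auto
    have "adj (del_edges H ?S) z z'" using z' by (simp add: adj_del)
    then have "reachable (del_edges H ?S) z z'" unfolding reachable_def by simp
    then have "{z, z'} \<subseteq> component (del_edges H ?S) z"
      using z zz by (simp add: component_def reachable_def)
    then have "card {z, z'} \<le> card (component (del_edges H ?S) z)"
      by (rule card_mono[OF fin_comp[OF sgH]])
    then show ?thesis using zz by simp
  qed
  show "restricted_edge_cut H ?S" unfolding restricted_edge_cut_def using cut two by simp
  have "card ?S = (\<Sum>p\<in>{u, v}. card (nb H p - {u, v}))" by (rule card_bdH[OF sgH]) (use uV in auto)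
  also have "\<dots> = card (nb H u - {u, v}) + card (nb H v - {u, v})" using uV by simp
  finally have c: "card ?S = card (nb H u - {u, v}) + card (nb H v - {u, v})" .
  have "nb H u - {u, v} = nb H u - {v}" using nb_irr[OF sgH] by blast
  moreover have "v \<in> nb H u" using uv by (simp add: nb_def)
  ultimately have c1: "card (nb H u - {u, v}) + 1 = card (nb H u)"
    using fin_nb[OF sgH] by (metis card_Diff_singleton add.commute card_Suc_Diff1 plus_1_eq_Suc)
  have "nb H v - {u, v} = nb H v - {u}" using nb_irr[OF sgH] by blast
  moreover have "u \<in> nb H v" using uv by (simp add: nb_def insert_commute)
  ultimately have c2: "card (nb H v - {u, v}) + 1 = card (nb H v)"
    using fin_nb[OF sgH] by (metis card_Diff_singleton add.commute card_Suc_Diff1 plus_1_eq_Suc)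
  show "card ?S + 2 = card (nb H u) + card (nb H v)" using c c1 c2 by simp
qed

context
  fixes G :: "'a sgraph"
  assumes sg: "sgraph G"
begin

lemma adj_layer:
  assumes "{(x, k), (y, l)} \<in> edges (strong_product G (path_graph n))"
  shows "l \<le> Suc k" "k \<le> Suc l"
  using assms unfolding sp_adj[OF sg] by auto

lemma comp_interval:
  assumes D: "D = component (del_edges (strong_product G (path_graph n)) S) u"
    and xk: "(x, k) \<in> D" and yl: "(y, l) \<in> D" and j: "k \<le> j" "j \<le> l"
  shows "\<exists>z. (z, j) \<in> D"
proof -
  let ?H = "del_edges (strong_product G (path_graph n)) S"
  have ru: "reachable ?H u (x, k)" using xk D by (simp add: component_def)
  have r: "reachable ?H (x, k) (y, l)"
    using xk yl D reach_sym reach_trans by (metis (no_types, lifting) component_def mem_Collect_eq)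
  have "\<forall>w. (adj ?H)\<^sup>*\<^sup>* (x, k) w \<longrightarrow> j \<le> snd w \<longrightarrow> (\<exists>z. (z, j) \<in> D)"
  proof (intro allI impI)
    fix w assume "(adj ?H)\<^sup>*\<^sup>* (x, k) w" "j \<le> snd w"
    then show "\<exists>z. (z, j) \<in> D"
    proof (induction rule: rtranclp_induct)
      case base
      then have "k = j" using j by simp
      then show ?case using xk by blast
    next
      case (step w w')
      show ?case
      proof (cases "j \<le> snd w")
        case True then show ?thesis using step by blast
      next
        case False
        obtain a b where w: "w = (a, b)" by (cases w)
        obtain a' b' where w': "w' = (a', b')" by (cases w')
        have e: "{(a, b), (a', b')} \<in> edges (strong_product G (path_graph n))"
          using step(2) w w' by (simp add: adj_del)
        have "b' \<le> Suc b" using adj_layer[OF e] by simp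
        then have bj: "b' = j" using False step(4) w w' by simp
        have "reachable ?H u w'" using ru step(1,2) unfolding reachable_def by simp
        moreover have "w' \<in> verts (strong_product G (path_graph n))"
          using sgraph_edgeD(3)[OF sg_X[OF sg] e] w' by simp
        ultimately have "w' \<in> D" using D by (simp add: component_def)
        then show ?thesis using w' bj by blast
      qed
    qed
  qed
  then show ?thesis using r j unfolding reachable_def by auto
qed

end


context
  fixes G :: "'a sgraph"
  assumes sg: "sgraph G" and conn: "connected G" and ntr: "nontrivial G"
begin

abbreviation "XX n \<equiv> strong_product G (path_graph n)"

lemma lamX_le:
  assumes "restricted_edge_cut (XX n) S0"
  shows "restricted_edge_connectivity (XX n) \<le> card S0"
proof -
  have "{S. restricted_edge_cut (XX n) S} \<subseteq> Pow (edges (XX n))"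
    by (auto simp: restricted_edge_cut_def edge_cut_def)
  moreover have "finite (Pow (edges (XX n)))" using fin_edges[OF sg_X[OF sg]] by simp
  ultimately have "finite {S. restricted_edge_cut (XX n) S}" by (rule finite_subset)
  then have "finite (card ` {S. restricted_edge_cut (XX n) S})" by simp
  moreover have "card S0 \<in> card ` {S. restricted_edge_cut (XX n) S}" using assms by blast
  ultimately show ?thesis unfolding restricted_edge_connectivity_def by (rule Min_le)
qed

lemma adjX: "x \<in> verts G \<Longrightarrow> y \<in> verts G \<Longrightarrow> k < n \<Longrightarrow> l < n \<Longrightarrow> (x, k) \<noteq> (y, l) \<Longrightarrow>
    (x = y \<or> {x, y} \<in> edges G) \<Longrightarrow> (l = k \<or> l = Suc k \<or> k = Suc l) \<Longrightarrow> {(x, k), (y, l)} \<in> edges (XX n)"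
  using sp_adj[OF sg] by blast

lemma nbG_ex: assumes "a \<in> verts G" obtains a' where "{a, a'} \<in> edges G" "a' \<in> verts G" "a \<noteq> a'"
proof -
  obtain a' where "a' \<in> nb G a" using nb_ne[OF sg conn ntr assms] by blast
  then have "{a, a'} \<in> edges G" by (simp add: nb_def)
  then show ?thesis using that sgraph_edgeD[OF sg] by blast
qed

lemma S0_bound:
  assumes n3: "3 \<le> n"
  shows "restricted_edge_connectivity (XX n) \<le> min (2 * min_edge_degree G + 4) (5 * min_degree G + 1)"
proof -
  have vX: "verts (XX n) = verts G \<times> {..<n}" by (rule sp_verts)
  have h1: "restricted_edge_connectivity (XX n) \<le> 2 * min_edge_degree G + 4"
  proof -
    obtain x y where xy: "{x, y} \<in> edges G" "card (nb G x) + card (nb G y) = min_edge_degree G + 2"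
      using xi_ex[OF sg conn ntr] by blast
    have xyV: "x \<in> verts G" "y \<in> verts G" "x \<noteq> y" using sgraph_edgeD[OF sg xy(1)] by auto
    let ?u = "(x, 0::nat)" and ?v = "(y, 0::nat)"
    have uv: "{?u, ?v} \<in> edges (XX n)" apply (rule adjX) using xyV xy n3 by auto
    have w: "(x, 2) \<in> verts (XX n)" "(x, 2) \<noteq> ?u" "(x, 2) \<noteq> ?v" using vX xyV n3 by auto
    have nbr: "\<exists>z'. {z, z'} \<in> edges (XX n) \<and> z' \<noteq> ?u \<and> z' \<noteq> ?v"
      if z: "z \<in> verts (XX n)" "z \<noteq> ?u" "z \<noteq> ?v" for z
    proof -
      obtain a k where zz: "z = (a, k)" "a \<in> verts G" "k < n" using z vX by auto
      show ?thesis
      proof (cases "k = 0")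
        case True
        have "{(a, k), (a, 1)} \<in> edges (XX n)" apply (rule adjX) using zz True n3 by auto
        then show ?thesis using zz by auto
      next
        case False
        obtain a' where a': "{a, a'} \<in> edges G" "a' \<in> verts G" "a \<noteq> a'" using nbG_ex[OF zz(2)] by blast
        have "{(a, k), (a', k)} \<in> edges (XX n)" apply (rule adjX) using zz a' by auto
        then show ?thesis using zz False by auto
      qed
    qed
    note rp = restricted_pair[OF sg_X[OF sg] uv w nbr]
    have "card (nb (XX n) ?u) = 2 * card (nb G x) + 1" by (rule deg0[OF sg]) (use xyV n3 in auto)
    moreover have "card (nb (XX n) ?v) = 2 * card (nb G y) + 1" by (rule deg0[OF sg]) (use xyV n3 in auto)
    ultimately have "card (bdH (XX n) {?u, ?v}) = 2 * min_edge_degree G + 4" using rp(2) xy(2) by simp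
    then show ?thesis using lamX_le[OF rp(1)] by simp
  qed
  have h2: "restricted_edge_connectivity (XX n) \<le> 5 * min_degree G + 1"
  proof -
    obtain x where x: "x \<in> verts G" "card (nb G x) = min_degree G" using dl_ex[OF sg conn ntr] by blast
    let ?u = "(x, 0::nat)" and ?v = "(x, 1::nat)"
    have uv: "{?u, ?v} \<in> edges (XX n)" apply (rule adjX) using x n3 by auto
    have w: "(x, 2) \<in> verts (XX n)" "(x, 2) \<noteq> ?u" "(x, 2) \<noteq> ?v" using vX x n3 by auto
    have nbr: "\<exists>z'. {z, z'} \<in> edges (XX n) \<and> z' \<noteq> ?u \<and> z' \<noteq> ?v"
      if z: "z \<in> verts (XX n)" "z \<noteq> ?u" "z \<noteq> ?v" for z
    proof -
      obtain a k where zz: "z = (a, k)" "a \<in> verts G" "k < n" using z vX by auto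
      show ?thesis
      proof (cases "a = x")
        case False
        have "{(a, k), (a, if k = 0 then 1 else k - 1)} \<in> edges (XX n)" apply (rule adjX) using zz n3 by auto
        then show ?thesis using zz False by auto
      next
        case True
        then have k2: "2 \<le> k" using z zz by auto
        obtain a' where a': "{a, a'} \<in> edges G" "a' \<in> verts G" "a \<noteq> a'" using nbG_ex[OF zz(2)] by blast
        have "{(a, k), (a', k)} \<in> edges (XX n)" apply (rule adjX) using zz a' by auto
        moreover have "(a', k) \<noteq> ?u" "(a', k) \<noteq> ?v" using k2 by auto
        ultimately show ?thesis using zz by blast
      qed
    qed
    note rp = restricted_pair[OF sg_X[OF sg] uv w nbr]
    have "card (nb (XX n) ?u) = 2 * card (nb G x) + 1" by (rule deg0[OF sg]) (use x n3 in auto)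
    moreover have "card (nb (XX n) ?v) = 3 * card (nb G x) + 2" by (rule deg1[OF sg]) (use x n3 in auto)
    ultimately have "card (bdH (XX n) {?u, ?v}) = 5 * min_degree G + 1" using rp(2) x(2) by simp
    then show ?thesis using lamX_le[OF rp(1)] by simp
  qed
  show ?thesis using h1 h2 by simp
qed

end


context
  fixes G :: "'a sgraph"
  assumes sg: "sgraph G" and conn: "connected G" and ntr: "nontrivial G"
begin

lemma comp_gc:
  assumes D: "D = component (del_edges (XX G n) S) v" and v: "v \<in> verts (XX G n)"
    and three: "3 \<le> card D" and ej: "j < n" "lay D j = {}" and nf: "\<forall>k<n. lay D k \<noteq> verts G"
  shows "min (2 * min_edge_degree G + 4) (5 * min_degree G + 1) < tot G n (lay D)"
proof -
  let ?al = "lay D"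
  have DX: "D \<subseteq> verts G \<times> {..<n}" using D comp_sub[of "del_edges (XX G n) S" v] by (simp add: sp_verts)
  have sub: "\<forall>k<n. ?al k \<subseteq> verts G \<and> ?al k \<noteq> verts G" using lay_sub[OF sg DX] nf by blast
  have thr: "3 \<le> (\<Sum>k<n. card (?al k))" using three card_C[OF sg DX] by simp
  have itv: "?al m \<noteq> {}" if h: "?al k1 \<noteq> {}" "?al k2 \<noteq> {}" "k1 \<le> m" "m \<le> k2" for k1 k2 m
  proof -
    obtain x where "(x, k1) \<in> D" using h(1) by (auto simp: lay_def)
    moreover obtain y where "(y, k2) \<in> D" using h(2) by (auto simp: lay_def)
    ultimately obtain z where "(z, m) \<in> D" using comp_interval[OF sg D] h(3,4) by blast
    then show ?thesis by (auto simp: lay_def)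
  qed
  obtain x0 k0 where v0: "v = (x0, k0)" by (cases v)
  have vD: "v \<in> D" unfolding D by (rule comp_self) (simp add: v)
  have "v \<in> verts G \<times> {..<n}" using v by (simp only: sp_verts)
  then have k0: "k0 < n" "?al k0 \<noteq> {}" using vD v0 by (auto simp: lay_def)
  have k0j: "k0 \<noteq> j" using k0 ej by auto
  define K where "K = {k. k < n \<and> ?al k \<noteq> {}}"
  have fK: "finite K" by (simp add: K_def)
  have K0: "k0 \<in> K" using k0 by (simp add: K_def)
  show ?thesis
  proof (cases "k0 < j")
    case True
    have Klt: "k < j" if "k \<in> K" for k
    proof (rule ccontr)
      assume "\<not> k < j"
      then have "?al j \<noteq> {}" using itv[of k0 k j] k0 that True by (simp add: K_def)
      then show False using ej by simp
    qed
    define a where "a = Max K"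
    have "K \<noteq> {}" using K0 by blast
    then have aK: "a \<in> K" using fK unfolding a_def by (rule Max_in[rotated])
    have aj: "a < j" using Klt aK by blast
    have ka: "k \<le> a" if "k \<in> K" for k using fK that by (simp add: a_def)
    show ?thesis
    proof (rule Gc[OF sg conn ntr sub])
      show "a < n" using aK by (simp add: K_def)
      show "Suc a < n" using aj ej by simp
      show "Suc a = Suc a \<or> a = Suc (Suc a)" by simp
      show "?al (Suc a) = {}" using ka[of "Suc a"] aj ej by (auto simp: K_def)
      show "?al a \<noteq> {}" using aK by (simp add: K_def)
      show "3 \<le> (\<Sum>k<n. card (?al k))" by (rule thr)
      assume "\<exists>k<n. k \<noteq> a \<and> ?al k \<noteq> {}"
      then obtain k where k: "k < n" "k \<noteq> a" "?al k \<noteq> {}" by blast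
      then have "k < a" using ka[of k] by (simp add: K_def)
      then obtain c where c: "a = Suc c" by (cases a) auto
      have "?al c \<noteq> {}" apply (rule itv[of k a]) using k aK \<open>k < a\<close> c by (auto simp: K_def)
      then show "\<exists>c<n. (c = Suc a \<or> a = Suc c) \<and> c \<noteq> Suc a \<and> ?al c \<noteq> {}"
        using c aK by (intro exI[of _ c]) (auto simp: K_def)
    qed
  next
    case False
    then have jk0: "j < k0" using k0j by simp
    have Kgt: "j < k" if "k \<in> K" for k
    proof (rule ccontr)
      assume "\<not> j < k"
      then have "?al j \<noteq> {}" using itv[of k k0 j] k0 that jk0 by (simp add: K_def)
      then show False using ej by simp
    qed
    define a where "a = Min K"
    have "K \<noteq> {}" using K0 by blast
    then have aK: "a \<in> K" using fK unfolding a_def by (rule Min_in[rotated])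
    have aj: "j < a" using Kgt aK by blast
    have ka: "a \<le> k" if "k \<in> K" for k using fK that by (simp add: a_def)
    obtain b where b: "a = Suc b" using aj by (cases a) auto
    show ?thesis
    proof (rule Gc[OF sg conn ntr sub])
      show "a < n" using aK by (simp add: K_def)
      show "b < n" using aK b by (simp add: K_def)
      show "b = Suc a \<or> a = Suc b" using b by simp
      show "?al b = {}" using ka[of b] b aK by (auto simp: K_def)
      show "?al a \<noteq> {}" using aK by (simp add: K_def)
      show "3 \<le> (\<Sum>k<n. card (?al k))" by (rule thr)
      assume "\<exists>k<n. k \<noteq> a \<and> ?al k \<noteq> {}"
      then obtain k where k: "k < n" "k \<noteq> a" "?al k \<noteq> {}" by blast
      then have "a < k" using ka[of k] by (simp add: K_def)
      have "?al (Suc a) \<noteq> {}" apply (rule itv[of a k]) using k aK \<open>a < k\<close> by (auto simp: K_def)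
      then show "\<exists>c<n. (c = Suc a \<or> a = Suc c) \<and> c \<noteq> b \<and> ?al c \<noteq> {}"
        using b k \<open>a < k\<close> by (intro exI[of _ "Suc a"]) auto
    qed
  qed
qed

end


lemma tot_le_S:
  assumes sg: "sgraph G" and S: "S \<subseteq> edges (strong_product G (path_graph n))"
    and D: "D = component (del_edges (strong_product G (path_graph n)) S) v"
  shows "tot G n (lay D) \<le> card S"
proof -
  let ?X = "strong_product G (path_graph n)"
  have sgX: "sgraph ?X" by (rule sg_X[OF sg])
  have DV: "D \<subseteq> verts ?X" using D comp_sub[of "del_edges ?X S" v] by simp
  have DX: "D \<subseteq> verts G \<times> {..<n}" using DV by (simp add: sp_verts)
  have "tot G n (lay D) = (\<Sum>z\<in>D. card (nb ?X z - D))" using cut_tot[OF sg DX] by simp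
  also have "\<dots> = card (bdH ?X D)" using card_bdH[OF sgX DV] by simp
  also have "\<dots> \<le> card S"
    apply (rule card_mono) using S fin_edges[OF sgX] finite_subset apply blast
    using bd_comp_sub[OF sgX] D by blast
  finally show ?thesis .
qed

theorem corollary3p3:
  fixes G :: "'a sgraph" and n :: nat
  assumes "sgraph G" and "connected G" and "nontrivial G"
    and "n \<ge> 2"
    and "min ((3 * n - 2) * edge_connectivity G) (card (verts G) + 2 * num_edges G)
         > min (2 * min_edge_degree G + 4) (5 * min_degree G + 1)"
  shows "super_restricted_edge_connected (strong_product G (path_graph n))"
proof -
  note sg = assms(1) and conn = assms(2) and ntr = assms(3)
  let ?X = "strong_product G (path_graph n)"
  let ?B = "min (2 * min_edge_degree G + 4) (5 * min_degree G + 1)"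
  let ?L = "min ((3 * n - 2) * edge_connectivity G) (card (verts G) + 2 * num_edges G)"
  have hyp: "?B < ?L" using assms(5) by simp
  have n3: "3 \<le> n"
  proof (rule ccontr)
    assume "\<not> 3 \<le> n"
    then have n2: "n = 2" using assms(4) by simp
    obtain x y where xy: "{x, y} \<in> edges G" "card (nb G x) + card (nb G y) = min_edge_degree G + 2"
      using xi_ex[OF sg conn ntr] by blast
    have "x \<in> verts G" "y \<in> verts G" using sgraph_edgeD[OF sg xy(1)] by auto
    then have "min_degree G \<le> card (nb G x)" "min_degree G \<le> card (nb G y)"
      using dl_le[OF sg conn ntr] by auto
    then have "4 * min_degree G \<le> 2 * min_edge_degree G + 4" using xy(2) by linarith
    moreover have "edge_connectivity G \<le> min_degree G" by (rule lam_le_dl[OF sg conn ntr])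
    ultimately have "4 * edge_connectivity G \<le> ?B" by simp
    moreover have "?L \<le> 4 * edge_connectivity G" using n2 by simp
    ultimately show False using hyp by linarith
  qed
  have bnd: "restricted_edge_connectivity ?X \<le> ?B" by (rule S0_bound[OF sg conn ntr n3])
  show ?thesis
    unfolding super_restricted_edge_connected_def
  proof (intro allI impI)
    fix S assume S: "restricted_edge_cut ?X S \<and> card S = restricted_edge_connectivity ?X"
    let ?H = "del_edges ?X S"
    have Ssub: "S \<subseteq> edges ?X" using S by (simp add: restricted_edge_cut_def edge_cut_def)
    show "\<exists>v\<in>verts ?X. card (component ?H v) = 2"
    proof (rule ccontr)
      assume no2: "\<not> (\<exists>v\<in>verts ?X. card (component ?H v) = 2)"
      have ge3: "3 \<le> card (component ?H v)" if "v \<in> verts ?X" for v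
      proof -
        have "2 \<le> card (component ?H v)" using S that by (simp add: restricted_edge_cut_def)
        moreover have "card (component ?H v) \<noteq> 2" using no2 that by blast
        ultimately show ?thesis by simp
      qed
      have "\<not> connected ?H" using S by (simp add: restricted_edge_cut_def edge_cut_def)
      then obtain u w where uw: "u \<in> verts ?X" "w \<in> verts ?X" "\<not> reachable ?H u w"
        unfolding connected_def by auto
      define C where "C = component ?H u"
      define al where "al = lay C"
      have CX: "C \<subseteq> verts G \<times> {..<n}" using comp_sub[of ?H u] by (simp add: C_def sp_verts)
      have alsub: "\<forall>k<n. al k \<subseteq> verts G" using lay_sub[OF sg CX] by (simp add: al_def)
      have totC: "tot G n al \<le> card S" using tot_le_S[OF sg Ssub] by (simp add: al_def C_def)
      have "?B < card S"
      proof (cases "\<exists>i<n. \<exists>j<n. al i = verts G \<and> al j = {}")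
        case True
        then obtain i j where ij: "i < n" "j < n" "al i = verts G" "al j = {}" by blast
        have "card (Rr G) \<le> tot G n al" by (rule Ga[OF sg alsub ij])
        then have "card (verts G) + 2 * num_edges G \<le> card S"
          using totC card_Rr[OF sg] by (simp add: num_edges_def)
        then show ?thesis using hyp by linarith
      next
        case nota: False
        show ?thesis
        proof (cases "\<exists>j<n. al j = {}")
          case True
          then obtain j where j: "j < n" "al j = {}" by blast
          have nf: "\<forall>k<n. lay C k \<noteq> verts G" using nota j by (auto simp: al_def)
          have "?B < tot G n (lay C)"
            apply (rule comp_gc[OF sg conn ntr C_def uw(1)])
            using ge3[OF uw(1)] j nf by (auto simp: al_def C_def)
          then show ?thesis using totC by (simp add: al_def)
        next
          case ne: False
          show ?thesis
          proof (cases "\<forall>k<n. al k \<noteq> verts G")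
            case True
            have "(3 * n - 2) * edge_connectivity G \<le> tot G n al"
              apply (rule Gb[OF sg conn ntr]) using alsub ne True n3 by auto
            then show ?thesis using totC hyp by linarith
          next
            case False
            then obtain i where i: "i < n" "al i = verts G" by blast
            define D where "D = component ?H w"
            have wC: "w \<notin> C" using uw by (simp add: C_def component_def)
            have disj: "C \<inter> D = {}" unfolding C_def D_def by (rule comp_disj) (use uw wC C_def in simp_all)
            have DX: "D \<subseteq> verts G \<times> {..<n}" using comp_sub[of ?H w] by (simp add: D_def sp_verts)
            have Di: "lay D i = {}"
            proof -
              have "x \<notin> lay D i" for x
              proof
                assume "x \<in> lay D i"
                then have "(x, i) \<in> D" "x \<in> verts G" using DX by (auto simp: lay_def)
                moreover then have "(x, i) \<in> C" using i by (auto simp: al_def lay_def)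
                ultimately show False using disj by blast
              qed
              then show ?thesis by blast
            qed
            have nfD: "\<forall>k<n. lay D k \<noteq> verts G"
            proof (intro allI impI)
              fix k assume k: "k < n"
              then obtain x where "x \<in> al k" using ne by blast
              then have "(x, k) \<in> C" "x \<in> verts G" using CX by (auto simp: al_def lay_def)
              then have "x \<notin> lay D k" using disj by (auto simp: lay_def)
              then show "lay D k \<noteq> verts G" using \<open>x \<in> verts G\<close> by blast
            qed
            have "?B < tot G n (lay D)"
              apply (rule comp_gc[OF sg conn ntr D_def uw(2)])
              using ge3[OF uw(2)] i(1) Di nfD by (auto simp: D_def)
            moreover have "tot G n (lay D) \<le> card S" using tot_le_S[OF sg Ssub D_def] .
            ultimately show ?thesis by simp
          qed
        qed
      qed
      then show False using S bnd by simp
    qed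
  qed
qed


end
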